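(* Let $d,n,r\ge1$, $\mathbf r=(r,\dots,r)\in\mathbb{N}^d$, $\theta\ge0$, $0<\varepsilon,\mu<1$ and $R\ge1$. Then the set $\mathcal{B}_{R,\mu,\theta,\mathbf r}$ of $d$-mode tensors in $\mathbb{R}^{n\times\cdots\times n}$ satisfies $$\mathcal{N}(\mathcal{B}_{R,\mu,\theta,\mathbf r},\|\cdot\|_F,\varepsilon)\le\Big(\frac{6(d+1)}{\varepsilon}\Big)^{r^d+rnd}(R^2+\mu r)^{r^dd/2}(R^2+\mu r^d)^{dnr/2}R^{(d-1)dnr}.$$
   Context: For $R\ge0$, $\mu,\theta\ge0$, $\mathcal{B}_{R,\mu,\theta,\mathbf r}$ is the set of $\mathcal{X}\in\mathbb{R}^{n\times\cdots\times n}$ ($d$ modes) that can be written $\mathcal{X}=\sum_{k_1,\dots,k_d=1}^{r}\mathcal{C}(k_1,\dots,k_d)\,\mathbf{u}^1_{k_1}\circ\cdots\circ\mathbf{u}^d_{k_d}$ ($\circ$ outer product, $\mathbf{u}^i_k\in\mathbb{R}^n$) such that (a) $\|\mathbf{u}^i_k\|_2\le R$ for all $i,k$; (b) $|\langle\mathbf{u}^i_k,\mathbf{u}^i_{k'}\rangle|\le\mu$ for all $i$, $k\ne k'$; (c) $\|\mathcal{C}\|_F=1$; (d) for each $i$ and $p\ne q$, $\sum_{k_j,\,j\ne i}\mathcal{C}(k_1,\dots,p,\dots,k_d)\mathcal{C}(k_1,\dots,q,\dots,k_d)=0$ ($p,q$ in position $i$); (e) $\|\mathcal{X}\|_F\ge\theta$.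 $\mathcal{N}(\mathcal{S},\|\cdot\|_F,t)$ is the minimal cardinality of a subset of $\mathcal{S}$ such that every element of $\mathcal{S}$ is within Frobenius distance $t$ of some element of the subset. *)

theory Defs
  imports "HOL-Analysis.Analysis"
begin

text \<open>A d-mode tensor in R^{n x ... x n} is a function on index lists that
  vanishes outside idx d n.\<close>
definition idx :: "nat \<Rightarrow> nat \<Rightarrow> nat list set" where
  "idx d m = {is. length is = d \<and> (\<forall>x\<in>set is. x < m)}"

definition frob :: "nat \<Rightarrow> nat \<Rightarrow> (nat list \<Rightarrow> real) \<Rightarrow> real" where
  "frob d m X = sqrt (\<Sum>is\<in>idx d m. (X is)\<^sup>2)"

definition vnorm :: "nat \<Rightarrow> (nat \<Rightarrow> real) \<Rightarrow> real" where
  "vnorm n v = sqrt (\<Sum>j<n. (v j)\<^sup>2)"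

definition vinner :: "nat \<Rightarrow> (nat \<Rightarrow> real) \<Rightarrow> (nat \<Rightarrow> real) \<Rightarrow> real" where
  "vinner n v w = (\<Sum>j<n. v j * w j)"

text \<open>Tucker-type tensor sum_{k} C(k_1..k_d) u^1_{k_1} o ... o u^d_{k_d};
  u i k is the vector u^{i+1}_{k+1}.\<close>
definition tucker :: "nat \<Rightarrow> nat \<Rightarrow> nat \<Rightarrow> (nat list \<Rightarrow> real) \<Rightarrow> (nat \<Rightarrow> nat \<Rightarrow> nat \<Rightarrow> real)
    \<Rightarrow> nat list \<Rightarrow> real" where
  "tucker d n r C u = (\<lambda>is. if is \<in> idx d n then
      (\<Sum>ks\<in>idx d r. C ks * (\<Prod>i<d. u i (ks ! i) (is ! i))) else 0)"

definition Bset :: "nat \<Rightarrow> nat \<Rightarrow> nat \<Rightarrow> real \<Rightarrow> real \<Rightarrow> real \<Rightarrow> (nat list \<Rightarrow> real) set" where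
  "Bset d n r R \<mu> \<theta> = {X. \<exists>C u. X = tucker d n r C u
      \<and> (\<forall>i<d. \<forall>k<r. vnorm n (u i k) \<le> R)
      \<and> (\<forall>i<d. \<forall>k<r. \<forall>k'<r. k \<noteq> k' \<longrightarrow> \<bar>vinner n (u i k) (u i k')\<bar> \<le> \<mu>)
      \<and> frob d r C = 1
      \<and> (\<forall>i<d. \<forall>p<r. \<forall>q<r. p \<noteq> q \<longrightarrow>
           (\<Sum>ks\<in>{ks\<in>idx d r. ks ! i = p}. C ks * C (ks[i := q])) = 0)
      \<and> frob d n X \<ge> \<theta>}"

text \<open>Covering number (internal: centres from S), in ereal; infinity if no finite cover.\<close>
definition covnum :: "nat \<Rightarrow> nat \<Rightarrow> (nat list \<Rightarrow> real) set \<Rightarrow> real \<Rightarrow> ereal" where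
  "covnum d n S t = (INF N \<in> {N. finite N \<and> N \<subseteq> S \<and>
       (\<forall>X\<in>S. \<exists>Y\<in>N. frob d n (\<lambda>is. X is - Y is) \<le> t)}. ereal (real (card N)))"

end

theory Submission
  imports Defs
begin

definition Tf :: "nat \<Rightarrow> nat \<Rightarrow> (nat list \<Rightarrow> real) \<Rightarrow> (nat \<Rightarrow> nat \<Rightarrow> nat \<Rightarrow> real) \<Rightarrow> nat list \<Rightarrow> real" where
  "Tf d r X A is = (\<Sum>ks\<in>idx d r. X ks * (\<Prod>j<d. A j (is!j) (ks!j)))"

definition fr :: "nat \<Rightarrow> nat \<Rightarrow> (nat list \<Rightarrow> real) \<Rightarrow> real" where
  "fr d m X = (\<Sum>is\<in>idx d m. (X is)\<^sup>2)"

definition opn :: "nat \<Rightarrow> nat \<Rightarrow> (nat \<Rightarrow> nat \<Rightarrow> real) \<Rightarrow> real \<Rightarrow> bool" where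
  "opn n r B l \<longleftrightarrow> (\<forall>y. (\<Sum>a<n. (\<Sum>k<r. B a k * y k)\<^sup>2) \<le> l\<^sup>2 * (\<Sum>k<r. (y k)\<^sup>2))"

lemma idx_0: "idx 0 m = {[]}"
  by (auto simp: idx_def)

lemma idx_Suc: "idx (Suc d) m = (\<lambda>(k,ks). k#ks) ` ({..<m} \<times> idx d m)"
proof (rule set_eqI)
  fix xs
  show "xs \<in> idx (Suc d) m \<longleftrightarrow> xs \<in> (\<lambda>(k,ks). k#ks) ` ({..<m} \<times> idx d m)"
    by (cases xs) (auto simp: idx_def image_iff)
qed

lemma finite_idx[simp]: "finite (idx d m)"
  by (induction d) (auto simp: idx_0 idx_Suc)

lemma inj_cons: "inj_on (\<lambda>(k,ks). k#ks) A"
  by (auto simp: inj_on_def)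

lemma sum_idx_Suc: "(\<Sum>xs\<in>idx (Suc d) m. f xs) = (\<Sum>k<m. \<Sum>ks\<in>idx d m. f (k#ks))"
  unfolding idx_Suc sum.reindex[OF inj_cons] by (simp add: sum.cartesian_product case_prod_beta)

lemma card_idx: "card (idx d m) = m ^ d"
  by (induction d) (simp_all add: idx_0 idx_Suc card_image[OF inj_cons] card_cartesian_product)

lemma fr_Suc: "fr (Suc d) m X = (\<Sum>k<m. fr d m (\<lambda>ks. X (k#ks)))"
  by (simp add: fr_def sum_idx_Suc)

lemma Tf_Suc: "Tf (Suc d) r X A (a#is) = (\<Sum>k<r. A 0 a k * Tf d r (\<lambda>ks. X (k#ks)) (\<lambda>j. A (Suc j)) is)"
  unfolding Tf_def sum_idx_Suc prod.lessThan_Suc_shift by (simp add: sum_distrib_left mult_ac)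

lemma Tf_lin: "finite S \<Longrightarrow> (\<Sum>k\<in>S. c k * Tf d r (X k) A is) = Tf d r (\<lambda>ks. \<Sum>k\<in>S. c k * X k ks) A is"
  by (simp add: Tf_def sum_distrib_left sum_distrib_right sum.swap[of _ S] mult_ac)

lemma fr_nonneg: "fr d m X \<ge> 0"
  by (simp add: fr_def sum_nonneg)

lemma op_lemma:
  assumes "\<And>j. j < d \<Longrightarrow> opn n r (A j) (l j)"
  shows "fr d n (Tf d r X A) \<le> (\<Prod>j<d. (l j)\<^sup>2) * fr d r X"
  using assms
proof (induction d arbitrary: X A l)
  case 0
  then show ?case by (simp add: fr_def Tf_def idx_0)
next
  case (Suc d)
  define W where "W k = Tf d r (\<lambda>ks. X (k#ks)) (\<lambda>j. A (Suc j))" for k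
  have IH: "fr d n (W k) \<le> (\<Prod>j<d. (l (Suc j))\<^sup>2) * fr d r (\<lambda>ks. X (k#ks))" for k
    unfolding W_def by (rule Suc.IH) (use Suc.prems in auto)
  have op0: "(\<Sum>a<n. (\<Sum>k<r. A 0 a k * y k)\<^sup>2) \<le> (l 0)\<^sup>2 * (\<Sum>k<r. (y k)\<^sup>2)" for y
    using Suc.prems[of 0] by (auto simp: opn_def)
  have "fr (Suc d) n (Tf (Suc d) r X A) = (\<Sum>a<n. \<Sum>is\<in>idx d n. (\<Sum>k<r. A 0 a k * W k is)\<^sup>2)"
    by (simp add: fr_def sum_idx_Suc Tf_Suc W_def)
  also have "\<dots> = (\<Sum>is\<in>idx d n. \<Sum>a<n. (\<Sum>k<r. A 0 a k * W k is)\<^sup>2)"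
    by (rule sum.swap)
  also have "\<dots> \<le> (\<Sum>is\<in>idx d n. (l 0)\<^sup>2 * (\<Sum>k<r. (W k is)\<^sup>2))"
    by (rule sum_mono) (rule op0)
  also have "\<dots> = (l 0)\<^sup>2 * (\<Sum>k<r. fr d n (W k))"
    by (simp add: fr_def sum_distrib_left sum.swap[of _ "idx d n"])
  also have "\<dots> \<le> (l 0)\<^sup>2 * (\<Sum>k<r. (\<Prod>j<d. (l (Suc j))\<^sup>2) * fr d r (\<lambda>ks. X (k#ks)))"
    by (intro mult_left_mono sum_mono IH) auto
  also have "\<dots> = (l 0)\<^sup>2 * ((\<Prod>j<d. (l (Suc j))\<^sup>2) * (\<Sum>k<r. fr d r (\<lambda>ks. X (k#ks))))"
    by (simp add: sum_distrib_left)
  also have "\<dots> = (\<Prod>j<Suc d. (l j)\<^sup>2) * fr (Suc d) r X"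
    by (simp only: fr_Suc prod.lessThan_Suc_shift mult.assoc)
  finally show ?case .
qed

lemma first_mode_step:
  assumes "opn n r (A 0) l0"
  shows "fr (Suc d) n (Tf (Suc d) r X A) \<le> l0\<^sup>2 * (\<Sum>k<r. fr d n (Tf d r (\<lambda>ks. X (k#ks)) (\<lambda>j. A (Suc j))))"
proof -
  define W where "W k = Tf d r (\<lambda>ks. X (k#ks)) (\<lambda>j. A (Suc j))" for k
  have op0: "(\<Sum>a<n. (\<Sum>k<r. A 0 a k * y k)\<^sup>2) \<le> l0\<^sup>2 * (\<Sum>k<r. (y k)\<^sup>2)" for y
    using assms by (auto simp: opn_def)
  have "fr (Suc d) n (Tf (Suc d) r X A) = (\<Sum>a<n. \<Sum>is\<in>idx d n. (\<Sum>k<r. A 0 a k * W k is)\<^sup>2)"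
    by (simp add: fr_def sum_idx_Suc Tf_Suc W_def)
  also have "\<dots> = (\<Sum>is\<in>idx d n. \<Sum>a<n. (\<Sum>k<r. A 0 a k * W k is)\<^sup>2)"
    by (rule sum.swap)
  also have "\<dots> \<le> (\<Sum>is\<in>idx d n. l0\<^sup>2 * (\<Sum>k<r. (W k is)\<^sup>2))"
    by (rule sum_mono) (rule op0)
  also have "\<dots> = l0\<^sup>2 * (\<Sum>k<r. fr d n (W k))"
    by (simp add: fr_def sum_distrib_left sum.swap[of _ "idx d n"])
  finally show ?thesis by (simp add: W_def)
qed

definition Gm :: "nat \<Rightarrow> (nat \<Rightarrow> nat \<Rightarrow> real) \<Rightarrow> nat \<Rightarrow> nat \<Rightarrow> real" where
  "Gm n B k k' = (\<Sum>a<n. B a k * B a k')"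

definition Sx :: "nat \<Rightarrow> nat \<Rightarrow> (nat list \<Rightarrow> real) \<Rightarrow> nat \<Rightarrow> nat \<Rightarrow> nat \<Rightarrow> real" where
  "Sx d r X i k k' = (\<Sum>ks\<in>{ks\<in>idx d r. ks!i = k}. X ks * X (ks[i:=k']))"

lemma sum_idx_Suc_filter:
  "(\<Sum>ks\<in>{ks\<in>idx (Suc d) r. P ks}. f ks) = (\<Sum>k<r. \<Sum>ks\<in>{ks\<in>idx d r. P (k#ks)}. f (k#ks))"
  by (simp add: sum.inter_filter sum_idx_Suc)

lemma Sx_Suc0: "k < r \<Longrightarrow> Sx (Suc d) r X 0 k k' = (\<Sum>ks\<in>idx d r. X (k#ks) * X (k'#ks))"
proof -
  assume k: "k < r"
  have "Sx (Suc d) r X 0 k k' = (\<Sum>j<r. \<Sum>ks\<in>{ks\<in>idx d r. j = k}. X (j#ks) * X (k'#ks))"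
    unfolding Sx_def sum_idx_Suc_filter by simp
  also have "\<dots> = (\<Sum>j<r. if j = k then (\<Sum>ks\<in>idx d r. X (j#ks) * X (k'#ks)) else 0)"
    by (intro sum.cong) auto
  also have "\<dots> = (\<Sum>ks\<in>idx d r. X (k#ks) * X (k'#ks))"
    using k by (simp add: sum.delta)
  finally show ?thesis .
qed

lemma Sx_SucSuc: "Sx (Suc d) r X (Suc i) p q = (\<Sum>k<r. Sx d r (\<lambda>ks. X (k#ks)) i p q)"
  unfolding Sx_def sum_idx_Suc_filter by simp

lemma quad_expand: "(\<Sum>a<n. (\<Sum>k<r. B a k * x k)\<^sup>2) = (\<Sum>k<r. \<Sum>k'<r. Gm n B k k' * (x k * x k'))"
  by (simp add: Gm_def power2_eq_square sum_product sum_distrib_left sum_distrib_right mult_ac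
      sum.swap[of _ "{..<n}"])

lemma H_lemma:
  assumes "i < d" "\<And>j. j < d \<Longrightarrow> j \<noteq> i \<Longrightarrow> opn n r (A j) (l j)"
  shows "fr d n (Tf d r X A) \<le> (\<Prod>j\<in>{..<d}-{i}. (l j)\<^sup>2) * (\<Sum>k<r. \<Sum>k'<r. Gm n (A i) k k' * Sx d r X i k k')"
  using assms
proof (induction d arbitrary: i X A l)
  case 0
  then show ?case by simp
next
  case (Suc d)
  note IHd = Suc.IH
  note prems = Suc.prems
  show ?case
  proof (cases i)
    case 0
    define Z where "Z = (\<lambda>a ks. (\<Sum>k<r. A 0 a k * X (k#ks)))"
    have eqT: "Tf (Suc d) r X A (a#is) = Tf d r (Z a) (\<lambda>j. A (Suc j)) is" for a "is"
      unfolding Tf_Suc Tf_lin[OF finite_lessThan] Z_def ..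
    have pe: "(\<Prod>j\<in>{..<Suc d}-{0}. (l j)\<^sup>2) = (\<Prod>j<d. (l (Suc j))\<^sup>2)"
    proof -
      have "{..<Suc d}-{0} = Suc ` {..<d}" using lessThan_Suc_eq_insert_0[of d] by auto
      then show ?thesis by (simp add: prod.reindex)
    qed
    have "fr (Suc d) n (Tf (Suc d) r X A) = (\<Sum>a<n. fr d n (\<lambda>is. Tf (Suc d) r X A (a#is)))"
      by (rule fr_Suc)
    also have "\<dots> = (\<Sum>a<n. fr d n (Tf d r (Z a) (\<lambda>j. A (Suc j))))"
      by (simp only: eqT)
    also have "\<dots> \<le> (\<Sum>a<n. (\<Prod>j<d. (l (Suc j))\<^sup>2) * fr d r (Z a))"
      by (intro sum_mono op_lemma) (use Suc.prems 0 in auto)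
    also have "\<dots> = (\<Prod>j<d. (l (Suc j))\<^sup>2) * (\<Sum>ks\<in>idx d r. \<Sum>a<n. (\<Sum>k<r. A 0 a k * X (k#ks))\<^sup>2)"
    proof -
      have "(\<Sum>a<n. fr d r (Z a)) = (\<Sum>ks\<in>idx d r. \<Sum>a<n. (\<Sum>k<r. A 0 a k * X (k#ks))\<^sup>2)"
        unfolding fr_def Z_def by (rule sum.swap)
      then show ?thesis by (simp add: sum_distrib_left[symmetric])
    qed
    also have "\<dots> = (\<Prod>j<d. (l (Suc j))\<^sup>2) * (\<Sum>k<r. \<Sum>k'<r. Gm n (A 0) k k' * Sx (Suc d) r X 0 k k')"
    proof -
      have "(\<Sum>ks\<in>idx d r. \<Sum>a<n. (\<Sum>k<r. A 0 a k * X (k#ks))\<^sup>2)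
          = (\<Sum>ks\<in>idx d r. \<Sum>k<r. \<Sum>k'<r. Gm n (A 0) k k' * (X (k#ks) * X (k'#ks)))"
        by (simp only: quad_expand)
      also have "\<dots> = (\<Sum>k<r. \<Sum>ks\<in>idx d r. \<Sum>k'<r. Gm n (A 0) k k' * (X (k#ks) * X (k'#ks)))"
        by (rule sum.swap)
      also have "\<dots> = (\<Sum>k<r. \<Sum>k'<r. \<Sum>ks\<in>idx d r. Gm n (A 0) k k' * (X (k#ks) * X (k'#ks)))"
        by (rule sum.cong[OF refl], rule sum.swap)
      also have "\<dots> = (\<Sum>k<r. \<Sum>k'<r. Gm n (A 0) k k' * Sx (Suc d) r X 0 k k')"
        by (intro sum.cong refl) (simp add: Sx_Suc0 sum_distrib_left)
      finally show ?thesis by simp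
    qed
    finally show ?thesis using 0 pe by simp
  next
    case (Suc i')
    note i = this
    have IH: "fr d n (Tf d r (\<lambda>ks. X (k#ks)) (\<lambda>j. A (Suc j))) \<le>
        (\<Prod>j\<in>{..<d}-{i'}. (l (Suc j))\<^sup>2) * (\<Sum>p<r. \<Sum>q<r. Gm n (A (Suc i')) p q * Sx d r (\<lambda>ks. X (k#ks)) i' p q)" for k
      by (rule IHd) (use prems i in auto)
    have pe: "(\<Prod>j\<in>{..<Suc d}-{Suc i'}. (l j)\<^sup>2) = (l 0)\<^sup>2 * (\<Prod>j\<in>{..<d}-{i'}. (l (Suc j))\<^sup>2)"
    proof -
      have "{..<Suc d}-{Suc i'} = insert 0 (Suc ` ({..<d}-{i'}))"
        using lessThan_Suc_eq_insert_0[of d] by auto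
      then show ?thesis by (simp add: prod.reindex)
    qed
    define P where "P = (\<Prod>j\<in>{..<d}-{i'}. (l (Suc j))\<^sup>2)"
    define G where "G = Gm n (A (Suc i'))"
    have "fr (Suc d) n (Tf (Suc d) r X A) \<le> (l 0)\<^sup>2 * (\<Sum>k<r. fr d n (Tf d r (\<lambda>ks. X (k#ks)) (\<lambda>j. A (Suc j))))"
      by (rule first_mode_step) (use prems i in auto)
    also have "\<dots> \<le> (l 0)\<^sup>2 * (\<Sum>k<r. P * (\<Sum>p<r. \<Sum>q<r. G p q * Sx d r (\<lambda>ks. X (k#ks)) i' p q))"
      unfolding P_def G_def by (intro mult_left_mono sum_mono IH) auto
    also have "(\<Sum>k<r. P * (\<Sum>p<r. \<Sum>q<r. G p q * Sx d r (\<lambda>ks. X (k#ks)) i' p q))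
       = P * (\<Sum>k<r. \<Sum>p<r. \<Sum>q<r. G p q * Sx d r (\<lambda>ks. X (k#ks)) i' p q)"
      by (simp only: sum_distrib_left)
    also have "(\<Sum>k<r. \<Sum>p<r. \<Sum>q<r. G p q * Sx d r (\<lambda>ks. X (k#ks)) i' p q)
       = (\<Sum>p<r. \<Sum>k<r. \<Sum>q<r. G p q * Sx d r (\<lambda>ks. X (k#ks)) i' p q)"
      by (rule sum.swap)
    also have "\<dots> = (\<Sum>p<r. \<Sum>q<r. \<Sum>k<r. G p q * Sx d r (\<lambda>ks. X (k#ks)) i' p q)"
      by (rule sum.cong[OF refl], rule sum.swap)
    also have "\<dots> = (\<Sum>p<r. \<Sum>q<r. G p q * Sx (Suc d) r X (Suc i') p q)"
      by (simp only: Sx_SucSuc sum_distrib_left)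
    finally show ?thesis using i pe by (simp add: P_def G_def mult.assoc)
  qed
qed

lemma lborel_affine_pre:
  fixes s c :: real
  assumes s: "s > 0" and A: "A \<in> sets borel"
  shows "emeasure lborel {y. c + s * y \<in> A} = ennreal (1/s) * emeasure lborel A"
proof -
  have eq: "lborel = density (distr lborel borel (\<lambda>x. c + s * x)) (\<lambda>_. ennreal \<bar>s\<bar>)"
    using lborel_real_affine[of s c] s by simp
  have "emeasure lborel A = emeasure (density (distr lborel borel (\<lambda>x. c + s * x)) (\<lambda>_. ennreal \<bar>s\<bar>)) A"
    using arg_cong[of _ _ "\<lambda>M. emeasure M A", OF eq] .
  also have "\<dots> = ennreal s * emeasure (distr lborel borel (\<lambda>x. c + s * x)) A"
    using A s by (simp add: emeasure_density_const)
  also have "\<dots> = ennreal s * emeasure lborel ((\<lambda>x. c + s * x) -` A \<inter> space lborel)"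
    using A by (subst emeasure_distr) auto
  also have "(\<lambda>x. c + s * x) -` A \<inter> space lborel = {y. c + s * y \<in> A}" by auto
  finally have *: "emeasure lborel A = ennreal s * emeasure lborel {y. c + s * y \<in> A}" .
  have "ennreal (1/s) * emeasure lborel A = (ennreal (1/s) * ennreal s) * emeasure lborel {y. c + s * y \<in> A}"
    by (simp add: * mult.assoc)
  also have "ennreal (1/s) * ennreal s = 1"
    using s by (simp add: ennreal_mult''[symmetric])
  finally show ?thesis by simp
qed

lemma pi_affine:
  fixes I :: "'a set" and x :: "'a \<Rightarrow> real" and s :: real
  assumes I: "finite I" and s: "s > 0"
  shows "density (distr (PiM I (\<lambda>_. lborel)) (PiM I (\<lambda>_. lborel)) (\<lambda>z. \<lambda>j\<in>I. x j + s * z j))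
           (\<lambda>_. ennreal (s ^ card I)) = PiM I (\<lambda>_. lborel)"
proof -
  interpret product_sigma_finite "\<lambda>_::'a. lborel" by standard
  let ?M = "PiM I (\<lambda>_::'a. lborel)"
  let ?T = "\<lambda>z. \<lambda>j\<in>I. x j + s * z j"
  have Tm: "?T \<in> measurable ?M ?M" by measurable
  show ?thesis
  proof (rule PiM_eqI[OF I])
    show "sets (density (distr ?M ?M ?T) (\<lambda>_. ennreal (s ^ card I))) = sets ?M" by simp
    fix A :: "'a \<Rightarrow> real set" assume A: "\<And>i. i \<in> I \<Longrightarrow> A i \<in> sets lborel"
    have pre: "?T -` PiE I A \<inter> space ?M = PiE I (\<lambda>i. {y. x i + s * y \<in> A i})"
      by (auto simp: space_PiM PiE_def Pi_def extensional_def)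
    have Ai: "i \<in> I \<Longrightarrow> {y. x i + s * y \<in> A i} \<in> sets lborel" for i
    proof -
      assume "i \<in> I"
      then have "A i \<in> sets borel" using A by simp
      then have "(\<lambda>y. x i + s * y) -` A i \<inter> space borel \<in> sets borel" by measurable
      then show ?thesis by (simp add: vimage_def)
    qed
    have "emeasure (density (distr ?M ?M ?T) (\<lambda>_. ennreal (s ^ card I))) (PiE I A)
        = ennreal (s ^ card I) * emeasure ?M (?T -` PiE I A \<inter> space ?M)"
      using A by (simp add: emeasure_density_const emeasure_distr[OF Tm] sets_PiM_I_finite I)
    also have "\<dots> = ennreal (s ^ card I) * (\<Prod>i\<in>I. emeasure lborel {y. x i + s * y \<in> A i})"
      unfolding pre using Ai by (simp add: emeasure_PiM I)
    also have "\<dots> = ennreal (s ^ card I) * (\<Prod>i\<in>I. ennreal (1/s) * emeasure lborel (A i))"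
      using A s by (intro arg_cong2[where f="(*)"] prod.cong refl lborel_affine_pre) auto
    also have "\<dots> = (ennreal (s ^ card I) * ennreal (1/s) ^ card I) * (\<Prod>i\<in>I. emeasure lborel (A i))"
      by (simp add: prod.distrib mult.assoc)
    also have "ennreal (s ^ card I) * ennreal (1/s) ^ card I = 1"
      using s by (simp add: ennreal_power[symmetric] ennreal_mult''[symmetric] power_mult_distrib[symmetric])
    finally show "emeasure (density (distr ?M ?M ?T) (\<lambda>_. ennreal (s ^ card I))) (PiE I A) = (\<Prod>i\<in>I. emeasure lborel (A i))"
      by (simp only: mult_1)
  qed
qed

definition bball :: "'a set \<Rightarrow> 'a set set \<Rightarrow> ('a \<Rightarrow> real) \<Rightarrow> real \<Rightarrow> ('a \<Rightarrow> real) set" where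
  "bball I Bl x t = {z \<in> space (PiM I (\<lambda>_. lborel)). \<forall>b\<in>Bl. sqrt (\<Sum>j\<in>b. (z j - x j)\<^sup>2) \<le> t}"

lemma bball_sets:
  assumes "finite Bl" "\<And>b. b \<in> Bl \<Longrightarrow> b \<subseteq> I"
  shows "bball I Bl x t \<in> sets (PiM I (\<lambda>_. lborel))"
proof -
  have m: "(\<lambda>z. sqrt (\<Sum>j\<in>b. (z j - x j)\<^sup>2)) \<in> borel_measurable (PiM I (\<lambda>_. lborel))" if "b \<in> Bl" for b
  proof -
    have "(\<lambda>z. (z j - x j)\<^sup>2) \<in> borel_measurable (PiM I (\<lambda>_. lborel))" if "j \<in> b" for j
    proof -
      have [measurable]: "(\<lambda>z. z j) \<in> borel_measurable (PiM I (\<lambda>_. lborel))"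
        using assms(2)[OF \<open>b \<in> Bl\<close>] that by (intro measurable_component_singleton[where M="\<lambda>_. lborel", simplified]) auto
      show ?thesis by measurable
    qed
    then have "(\<lambda>z. \<Sum>j\<in>b. (z j - x j)\<^sup>2) \<in> borel_measurable (PiM I (\<lambda>_. lborel))"
      by (intro borel_measurable_sum) auto
    then show ?thesis using measurable_compose borel_measurable_sqrt by blast
  qed
  show ?thesis unfolding bball_def
    using m assms(1) by (intro sets.sets_Collect_finite_All measurable_sets) auto
qed

lemma bball_scale:
  fixes I :: "'a set"
  assumes I: "finite I" and Bl: "finite Bl" "\<And>b. b \<in> Bl \<Longrightarrow> b \<subseteq> I" and s: "s > 0"
  shows "emeasure (PiM I (\<lambda>_. lborel)) (bball I Bl x s) = ennreal (s ^ card I) * emeasure (PiM I (\<lambda>_. lborel)) (bball I Bl (\<lambda>_. 0) 1)"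
proof -
  let ?M = "PiM I (\<lambda>_::'a. lborel)"
  let ?T = "\<lambda>z. \<lambda>j\<in>I. x j + s * z j"
  have Tm: "?T \<in> measurable ?M ?M" by measurable
  have "emeasure ?M (bball I Bl x s) = emeasure (density (distr ?M ?M ?T) (\<lambda>_. ennreal (s ^ card I))) (bball I Bl x s)"
    by (simp only: pi_affine[OF I s])
  also have "\<dots> = ennreal (s ^ card I) * emeasure ?M (?T -` bball I Bl x s \<inter> space ?M)"
    using bball_sets[OF Bl] by (simp add: emeasure_density_const emeasure_distr[OF Tm])
  also have "?T -` bball I Bl x s \<inter> space ?M = bball I Bl (\<lambda>_. 0) 1"
  proof -
    have eq: "sqrt (\<Sum>j\<in>b. ((if j \<in> I then x j + s * z j else undefined) - x j)\<^sup>2) = s * sqrt (\<Sum>j\<in>b. (z j)\<^sup>2)" if "b \<in> Bl" for b z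
    proof -
      have "(\<Sum>j\<in>b. ((if j \<in> I then x j + s * z j else undefined) - x j)\<^sup>2) = s\<^sup>2 * (\<Sum>j\<in>b. (z j)\<^sup>2)"
        using Bl(2)[OF that] by (auto simp: sum_distrib_left power_mult_distrib intro!: sum.cong)
      then show ?thesis using s by (simp add: real_sqrt_mult)
    qed
    have sp: "?T z \<in> space ?M" for z by (simp add: space_PiM)
    show ?thesis
      unfolding bball_def using s by (auto simp: eq sp mult_le_cancel_left1)
  qed
  finally show ?thesis .
qed

definition l2d :: "'a set \<Rightarrow> ('a \<Rightarrow> real) \<Rightarrow> ('a \<Rightarrow> real) \<Rightarrow> real" where
  "l2d b x y = sqrt (\<Sum>j\<in>b. (x j - y j)\<^sup>2)"

lemma l2d_sym: "l2d b x y = l2d b y x"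
  unfolding l2d_def by (simp add: power2_commute)

lemma l2d_tri: "l2d b x y \<le> l2d b x z + l2d b z y"
proof -
  have "l2d b x y = L2_set (\<lambda>j. (x j - z j) + (z j - y j)) b"
    by (simp add: l2d_def L2_set_def)
  also have "\<dots> \<le> L2_set (\<lambda>j. x j - z j) b + L2_set (\<lambda>j. z j - y j) b"
    by (rule L2_set_triangle_ineq)
  finally show ?thesis by (simp add: l2d_def L2_set_def)
qed

lemma l2d_self: "l2d b x x = 0"
  by (simp add: l2d_def)

lemma l2d_nonneg: "l2d b x y \<ge> 0"
  by (simp add: l2d_def sum_nonneg)

lemma bball_l2d: "bball I Bl x t = {z \<in> space (PiM I (\<lambda>_. lborel)). \<forall>b\<in>Bl. l2d b z x \<le> t}"
  by (simp add: bball_def l2d_def)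

lemma bball_finite_measure:
  assumes I: "finite I" and Bl: "\<Union>Bl = I"
  shows "emeasure (PiM I (\<lambda>_. lborel)) (bball I Bl (\<lambda>_. 0) 1) < \<infinity>"
proof -
  interpret product_sigma_finite "\<lambda>_::'a. lborel" by standard
  have finBl: "finite Bl" using Bl I by (metis Pow_UNIV UNIV_I Union_Pow_eq finite_Pow_iff finite_subset Sup_le_iff subsetI Pow_iff) 
  have sub: "bball I Bl (\<lambda>_. 0) 1 \<subseteq> PiE I (\<lambda>_. {-1..1})"
  proof
    fix z assume z: "z \<in> bball I Bl (\<lambda>_. 0) 1"
    then have zs: "z \<in> PiE I (\<lambda>_. UNIV)" by (simp add: bball_def space_PiM)
    have "z j \<in> {-1..1}" if j: "j \<in> I" for j
    proof -
      obtain b where b: "b \<in> Bl" "j \<in> b" using j Bl by auto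
      have fb: "finite b" using b Bl I by (meson Union_upper finite_subset)
      have "sqrt (\<Sum>j\<in>b. (z j - 0)\<^sup>2) \<le> 1" using z b by (auto simp: bball_def)
      then have "(\<Sum>j\<in>b. (z j)\<^sup>2) \<le> 1" by simp
      moreover have "(z j)\<^sup>2 \<le> (\<Sum>j\<in>b. (z j)\<^sup>2)"
        using b fb by (intro member_le_sum) auto
      ultimately have "(z j)\<^sup>2 \<le> 1" by linarith
      then show ?thesis using abs_square_le_1[of "z j"] by (simp add: abs_le_iff)
    qed
    with zs show "z \<in> PiE I (\<lambda>_. {-1..1})" by (auto simp: PiE_def Pi_def)
  qed
  have "emeasure (PiM I (\<lambda>_. lborel)) (bball I Bl (\<lambda>_. 0) 1) \<le> emeasure (PiM I (\<lambda>_. lborel)) (PiE I (\<lambda>_. {-1..1::real}))"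
    by (rule emeasure_mono[OF sub]) (simp add: sets_PiM_I_finite I)
  also have "\<dots> = (\<Prod>i\<in>I. emeasure lborel {-1..1::real})"
    by (simp add: emeasure_PiM I)
  also have "\<dots> = ennreal (2 ^ card I)" using ennreal_power[of 2 "card I"] by simp
  also have "\<dots> < \<infinity>" by simp
  finally show ?thesis .
qed

lemma bball_pos_measure:
  assumes I: "finite I" and Bl: "\<Union>Bl = I"
  shows "emeasure (PiM I (\<lambda>_. lborel)) (bball I Bl (\<lambda>_. 0) 1) > 0"
proof -
  interpret product_sigma_finite "\<lambda>_::'a. lborel" by standard
  have finBl: "finite Bl" using Bl I by (metis Pow_UNIV UNIV_I Union_Pow_eq finite_Pow_iff finite_subset Sup_le_iff subsetI Pow_iff) 
  define e where "e = 1 / (real (card I) + 1)"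
  have e: "e > 0" "e \<le> 1" by (auto simp: e_def field_simps)
  have sub: "PiE I (\<lambda>_. {-e..e}) \<subseteq> bball I Bl (\<lambda>_. 0) 1"
  proof
    fix z assume z: "z \<in> PiE I (\<lambda>_. {-e..e})"
    have "sqrt (\<Sum>j\<in>b. (z j - 0)\<^sup>2) \<le> 1" if b: "b \<in> Bl" for b
    proof -
      have bI: "b \<subseteq> I" using b Bl by auto
      have fb: "finite b" using bI I by (meson finite_subset)
      have "(\<Sum>j\<in>b. (z j)\<^sup>2) \<le> (\<Sum>j\<in>b. e\<^sup>2)"
      proof (rule sum_mono)
        fix j assume "j \<in> b"
        then have "\<bar>z j\<bar> \<le> e" using z bI by (auto simp: PiE_def Pi_def abs_le_iff)
        then show "(z j)\<^sup>2 \<le> e\<^sup>2" by (metis abs_ge_zero power2_abs power_mono)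
      qed
      also have "\<dots> = real (card b) * e\<^sup>2" by simp
      also have "\<dots> \<le> real (card I) * e\<^sup>2"
        using card_mono[OF I bI] by (intro mult_right_mono) auto
      also have "\<dots> \<le> 1"
      proof -
        have "real (card I) * e\<^sup>2 \<le> (real (card I) + 1) * e * e" using e by (simp add: power2_eq_square mult_right_mono)
        also have "\<dots> = e" by (simp add: e_def)
        finally show ?thesis using e by simp
      qed
      finally show ?thesis by simp
    qed
    moreover have "z \<in> space (PiM I (\<lambda>_. lborel))" using z by (auto simp: space_PiM PiE_def)
    ultimately show "z \<in> bball I Bl (\<lambda>_. 0) 1" by (simp add: bball_def)
  qed
  have "0 < (\<Prod>i\<in>I. emeasure lborel {-e..e})"
    using e by (simp, subst ennreal_power) auto
  also have "\<dots> = emeasure (PiM I (\<lambda>_. lborel)) (PiE I (\<lambda>_. {-e..e}))"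
    by (simp add: emeasure_PiM I)
  also have "\<dots> \<le> emeasure (PiM I (\<lambda>_. lborel)) (bball I Bl (\<lambda>_. 0) 1)"
    by (rule emeasure_mono[OF sub]) (rule bball_sets[OF finBl], use Bl in auto)
  finally show ?thesis .
qed

lemma finite_blocks: "finite I \<Longrightarrow> \<Union>Bl = I \<Longrightarrow> finite Bl"
  by (metis Sup_le_iff finite_Pow_iff finite_subset subsetI Pow_iff)

lemma packing_card:
  fixes I :: "'a set" and N :: "('a \<Rightarrow> real) set"
  assumes I: "finite I" and Bl: "\<Union>Bl = I" and \<delta>: "\<delta> > 0" and R: "R \<ge> 0"
    and N: "finite N" and NK: "\<And>x b. x \<in> N \<Longrightarrow> b \<in> Bl \<Longrightarrow> l2d b x (\<lambda>_. 0) \<le> R"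
    and sep: "\<And>x y. x \<in> N \<Longrightarrow> y \<in> N \<Longrightarrow> x \<noteq> y \<Longrightarrow> \<exists>b\<in>Bl. l2d b x y > \<delta>"
  shows "real (card N) \<le> (1 + 2 * R / \<delta>) ^ card I"
proof -
  let ?M = "PiM I (\<lambda>_::'a. lborel)"
  let ?D = "card I"
  have finBl: "finite Bl" using finite_blocks[OF I Bl] .
  have bI: "\<And>b. b \<in> Bl \<Longrightarrow> b \<subseteq> I" using Bl by auto
  obtain v where v: "emeasure ?M (bball I Bl (\<lambda>_. 0) 1) = ennreal v" "v \<ge> 0"
    using bball_finite_measure[OF I Bl] by (cases "emeasure ?M (bball I Bl (\<lambda>_. 0) 1)") auto
  have vpos: "v > 0" using bball_pos_measure[OF I Bl] v by auto
  have scale: "emeasure ?M (bball I Bl y t) = ennreal (t ^ ?D * v)" if "t > 0" for y t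
    using bball_scale[OF I finBl bI that, of y] v that by (simp add: ennreal_mult)
  define F where "F y = bball I Bl y (\<delta>/2)" for y
  have Fs: "F y \<in> sets ?M" for y unfolding F_def by (rule bball_sets[OF finBl bI])
  have disj: "disjoint_family_on F N"
    unfolding disjoint_family_on_def
  proof (intro ballI impI)
    fix x y assume x: "x \<in> N" and y: "y \<in> N" and xy: "x \<noteq> y"
    show "F x \<inter> F y = {}"
    proof (rule ccontr)
      assume "F x \<inter> F y \<noteq> {}"
      then obtain z where z: "z \<in> F x" "z \<in> F y" by blast
      obtain b where b: "b \<in> Bl" "l2d b x y > \<delta>" using sep[OF x y xy] by blast
      have "l2d b x y \<le> l2d b x z + l2d b z y" by (rule l2d_tri)
      also have "\<dots> = l2d b z x + l2d b z y" by (simp add: l2d_sym)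
      also have "\<dots> \<le> \<delta>/2 + \<delta>/2" using z b by (intro add_mono) (auto simp: F_def bball_l2d)
      finally show False using b by simp
    qed
  qed
  have union: "(\<Union>y\<in>N. F y) \<subseteq> bball I Bl (\<lambda>_. 0) (R + \<delta>/2)"
  proof
    fix z assume "z \<in> (\<Union>y\<in>N. F y)"
    then obtain y where y: "y \<in> N" "z \<in> F y" by blast
    have "l2d b z (\<lambda>_. 0) \<le> R + \<delta>/2" if b: "b \<in> Bl" for b
    proof -
      have "l2d b z (\<lambda>_. 0) \<le> l2d b z y + l2d b y (\<lambda>_. 0)" by (rule l2d_tri)
      also have "\<dots> \<le> \<delta>/2 + R" using y b NK by (intro add_mono) (auto simp: F_def bball_l2d)
      finally show ?thesis by simp
    qed
    then show "z \<in> bball I Bl (\<lambda>_. 0) (R + \<delta>/2)" using y by (auto simp: F_def bball_l2d)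
  qed
  have "ennreal (real (card N) * ((\<delta>/2) ^ ?D * v)) = (\<Sum>y\<in>N. ennreal ((\<delta>/2) ^ ?D * v))"
    by (simp add: ennreal_mult' ennreal_of_nat_eq_real_of_nat[symmetric])
  also have "\<dots> = (\<Sum>y\<in>N. emeasure ?M (F y))"
    unfolding F_def using \<delta> by (intro sum.cong refl) (simp add: scale)
  also have "\<dots> = emeasure ?M (\<Union>y\<in>N. F y)"
    using Fs disj N by (intro sum_emeasure) auto
  also have "\<dots> \<le> emeasure ?M (bball I Bl (\<lambda>_. 0) (R + \<delta>/2))"
    by (rule emeasure_mono[OF union]) (rule bball_sets[OF finBl bI])
  also have "\<dots> = ennreal ((R + \<delta>/2) ^ ?D * v)"
    using R \<delta> by (intro scale) simp
  finally have le: "ennreal (real (card N) * ((\<delta>/2) ^ ?D * v)) \<le> ennreal ((R + \<delta>/2) ^ ?D * v)" .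
  have nn: "0 \<le> (R + \<delta>/2) ^ ?D * v" using R \<delta> v by simp
  have "(real (card N) * (\<delta>/2) ^ ?D) * v \<le> (R + \<delta>/2) ^ ?D * v"
    using le unfolding ennreal_le_iff[OF nn] by (simp only: mult.assoc)
  then have "real (card N) * (\<delta>/2) ^ ?D \<le> (R + \<delta>/2) ^ ?D"
    by (rule mult_right_le_imp_le) (rule vpos)
  then have "real (card N) \<le> (R + \<delta>/2) ^ ?D / (\<delta>/2) ^ ?D"
    using \<delta> by (subst pos_le_divide_eq) simp_all
  also have "\<dots> = ((R + \<delta>/2) / (\<delta>/2)) ^ ?D"
    by (rule power_divide[symmetric])
  also have "(R + \<delta>/2) / (\<delta>/2) = 1 + 2 * R / \<delta>"
    using \<delta> by (simp add: field_simps)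
  finally show ?thesis .
qed

lemma exists_net:
  fixes I :: "'a set" and K :: "('a \<Rightarrow> real) set"
  assumes I: "finite I" and Bl: "\<Union>Bl = I" and \<delta>: "\<delta> > 0" and R: "R \<ge> 0"
    and K: "\<And>x b. x \<in> K \<Longrightarrow> b \<in> Bl \<Longrightarrow> l2d b x (\<lambda>_. 0) \<le> R"
  shows "\<exists>N. finite N \<and> N \<subseteq> K \<and> real (card N) \<le> (1 + 2 * R / \<delta>) ^ card I
            \<and> (\<forall>x\<in>K. \<exists>y\<in>N. \<forall>b\<in>Bl. l2d b x y \<le> \<delta>)"
proof -
  define P where "P N \<longleftrightarrow> finite N \<and> N \<subseteq> K \<and> (\<forall>x\<in>N. \<forall>y\<in>N. x \<noteq> y \<longrightarrow> (\<exists>b\<in>Bl. l2d b x y > \<delta>))" for N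
  define B where "B = nat \<lceil>(1 + 2 * R / \<delta>) ^ card I\<rceil> + 1"
  have bnd: "card N < B" if "P N" for N
  proof -
    have "real (card N) \<le> (1 + 2 * R / \<delta>) ^ card I"
      using that unfolding P_def by (intro packing_card[OF I Bl \<delta> R]) (auto intro: K)
    then have "card N \<le> nat \<lceil>(1 + 2 * R / \<delta>) ^ card I\<rceil>"
    proof -
      have "int (card N) \<le> \<lceil>(1 + 2 * R / \<delta>) ^ card I\<rceil>"
        using \<open>real (card N) \<le> _\<close> by (metis ceiling_mono ceiling_of_nat)
      then show ?thesis by arith
    qed
    then show ?thesis by (simp add: B_def)
  qed
  have P0: "P {}" by (simp add: P_def)
  obtain N where N: "P N" and Nmax: "\<And>N'. P N' \<Longrightarrow> card N' \<le> card N"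
    using ex_has_greatest_nat[of P "{}" card B] P0 bnd by blast
  have cover: "\<exists>y\<in>N. \<forall>b\<in>Bl. l2d b x y \<le> \<delta>" if x: "x \<in> K" for x
  proof (rule ccontr)
    assume "\<not> ?thesis"
    then have far: "\<And>y. y \<in> N \<Longrightarrow> \<exists>b\<in>Bl. l2d b x y > \<delta>" by (auto simp: not_le)
    have xN: "x \<notin> N"
    proof
      assume "x \<in> N"
      then obtain b where "l2d b x x > \<delta>" using far by blast
      then show False using \<delta> by (simp add: l2d_self)
    qed
    have "P (insert x N)"
    proof -
      have sepN: "\<forall>u\<in>N. \<forall>w\<in>N. u \<noteq> w \<longrightarrow> (\<exists>b\<in>Bl. l2d b u w > \<delta>)" and fN: "finite N" and NK: "N \<subseteq> K"
        using N by (auto simp: P_def)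
      have "\<exists>b\<in>Bl. l2d b u w > \<delta>" if u: "u \<in> insert x N" and w: "w \<in> insert x N" and uw: "u \<noteq> w" for u w
      proof (cases "u = x")
        case True
        then have "w \<in> N" using w uw by auto
        then show ?thesis using far True by blast
      next
        case False
        then have uN: "u \<in> N" using u by auto
        show ?thesis
        proof (cases "w = x")
          case True
          obtain b where "b \<in> Bl" "l2d b x u > \<delta>" using far[OF uN] by blast
          then show ?thesis using True by (metis l2d_sym)
        next
          case False
          then show ?thesis using sepN uN w uw by auto
        qed
      qed
      then show ?thesis using fN NK x unfolding P_def by blast
    qed
    then have "card (insert x N) \<le> card N" by (rule Nmax)
    moreover have "card (insert x N) = Suc (card N)" using N xN by (simp add: P_def)
    ultimately show False by simp
  qed
  show ?thesis
  proof (intro exI[of _ N] conjI ballI)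
    show fN: "finite N" and NK: "N \<subseteq> K" using N by (auto simp: P_def)
    show "real (card N) \<le> (1 + 2 * R / \<delta>) ^ card I"
      using N unfolding P_def by (intro packing_card[OF I Bl \<delta> R]) (auto intro: K)
    show "\<exists>y\<in>N. \<forall>b\<in>Bl. l2d b x y \<le> \<delta>" if "x \<in> K" for x using cover that by blast
  qed
qed

lemma sum_abs_sq_le: "(\<Sum>k<r. \<bar>y k\<bar>)\<^sup>2 \<le> real r * (\<Sum>k<r. (y k)\<^sup>2)"
proof -
  have "0 \<le> (\<Sum>k<r. \<Sum>k'<r. (\<bar>y k\<bar> - \<bar>y k'\<bar>)\<^sup>2)" by (intro sum_nonneg) auto
  also have "\<dots> = (\<Sum>k<r. \<Sum>k'<r. (y k)\<^sup>2 + (y k')\<^sup>2 - 2 * (\<bar>y k\<bar> * \<bar>y k'\<bar>))"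
    by (intro sum.cong refl) (simp add: power2_eq_square algebra_simps)
  also have "\<dots> = 2 * (real r * (\<Sum>k<r. (y k)\<^sup>2)) - 2 * (\<Sum>k<r. \<bar>y k\<bar>)\<^sup>2"
  proof -
    have e: "(\<Sum>k<r. \<Sum>k'<r. (y k)\<^sup>2 + (y k')\<^sup>2 - 2 * (\<bar>y k\<bar> * \<bar>y k'\<bar>))
        = (\<Sum>k<r. \<Sum>k'<r. (y k)\<^sup>2) + (\<Sum>k<r. \<Sum>k'<r. (y k')\<^sup>2) - 2 * (\<Sum>k<r. \<Sum>k'<r. \<bar>y k\<bar> * \<bar>y k'\<bar>)"
      by (simp only: sum_subtractf sum.distrib sum_distrib_left)
    have e1: "(\<Sum>k<r. \<Sum>k'<r. (y k)\<^sup>2) = real r * (\<Sum>k<r. (y k)\<^sup>2)"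
      by (simp add: sum_distrib_left mult.commute)
    have e2: "(\<Sum>k<r. \<Sum>k'<r. (y k')\<^sup>2) = real r * (\<Sum>k<r. (y k)\<^sup>2)"
      by simp
    have e3: "(\<Sum>k<r. \<Sum>k'<r. \<bar>y k\<bar> * \<bar>y k'\<bar>) = (\<Sum>k<r. \<bar>y k\<bar>)\<^sup>2"
      by (simp only: power2_eq_square sum_product)
    show ?thesis unfolding e e1 e2 e3 by simp
  qed
  finally show ?thesis by simp
qed

lemma op_incoh:
  fixes w :: "nat \<Rightarrow> nat \<Rightarrow> real"
  assumes nrm: "\<And>k. k < r \<Longrightarrow> vnorm n (w k) \<le> R"
    and inc: "\<And>k k'. k < r \<Longrightarrow> k' < r \<Longrightarrow> k \<noteq> k' \<Longrightarrow> \<bar>vinner n (w k) (w k')\<bar> \<le> \<mu>"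
    and \<mu>: "\<mu> \<ge> 0" and r: "r \<ge> 1"
  shows "opn n r (\<lambda>a k. w k a) (sqrt (R\<^sup>2 + \<mu> * (real r - 1)))"
  unfolding opn_def
proof
  fix y :: "nat \<Rightarrow> real"
  define c where "c (k::nat) (k'::nat) = (if k = k' then R\<^sup>2 else \<mu>)" for k k'
  have G: "Gm n (\<lambda>a k. w k a) k k' = vinner n (w k) (w k')" for k k'
    by (simp add: Gm_def vinner_def)
  have trm: "Gm n (\<lambda>a k. w k a) k k' * (y k * y k') \<le> \<bar>y k\<bar> * \<bar>y k'\<bar> * c k k'" if "k < r" "k' < r" for k k'
  proof -
    have "\<bar>vinner n (w k) (w k')\<bar> \<le> c k k'"
    proof (cases "k = k'")
      case True
      have "vinner n (w k) (w k) = (vnorm n (w k))\<^sup>2"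
        by (simp add: vinner_def vnorm_def power2_eq_square sum_nonneg)
      moreover have "(vnorm n (w k))\<^sup>2 \<le> R\<^sup>2"
        using nrm[OF that(1)] by (intro power_mono) (auto simp: vnorm_def sum_nonneg)
      ultimately show ?thesis using True by (simp add: c_def)
    next
      case False
      then show ?thesis using inc that by (simp add: c_def)
    qed
    then have "vinner n (w k) (w k') * (y k * y k') \<le> c k k' * (\<bar>y k\<bar> * \<bar>y k'\<bar>)"
    proof -
      have "vinner n (w k) (w k') * (y k * y k') \<le> \<bar>vinner n (w k) (w k') * (y k * y k')\<bar>" by (rule abs_ge_self)
      also have "\<dots> = \<bar>vinner n (w k) (w k')\<bar> * (\<bar>y k\<bar> * \<bar>y k'\<bar>)" by (simp add: abs_mult)
      also have "\<dots> \<le> c k k' * (\<bar>y k\<bar> * \<bar>y k'\<bar>)" by (rule mult_right_mono) (use \<open>_ \<le> c k k'\<close> in auto)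
      finally show ?thesis .
    qed
    then show ?thesis by (simp add: G mult_ac)
  qed
  have "(\<Sum>a<n. (\<Sum>k<r. w k a * y k)\<^sup>2) = (\<Sum>k<r. \<Sum>k'<r. Gm n (\<lambda>a k. w k a) k k' * (y k * y k'))"
    using quad_expand[where B="\<lambda>a k. w k a" and x=y and n=n and r=r] by simp
  also have "\<dots> \<le> (\<Sum>k<r. \<Sum>k'<r. \<bar>y k\<bar> * \<bar>y k'\<bar> * c k k')"
    by (intro sum_mono trm) auto
  also have "\<dots> = (\<Sum>k<r. \<Sum>k'<r. \<mu> * (\<bar>y k\<bar> * \<bar>y k'\<bar>)) + (\<Sum>k<r. (R\<^sup>2 - \<mu>) * (y k)\<^sup>2)"
  proof -
    have "(\<Sum>k'<r. \<bar>y k\<bar> * \<bar>y k'\<bar> * c k k') = (\<Sum>k'<r. \<mu> * (\<bar>y k\<bar> * \<bar>y k'\<bar>)) + (if k < r then (R\<^sup>2 - \<mu>) * (y k)\<^sup>2 else 0)" for k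
    proof -
      have "(\<Sum>k'<r. \<bar>y k\<bar> * \<bar>y k'\<bar> * c k k') = (\<Sum>k'<r. \<mu> * (\<bar>y k\<bar> * \<bar>y k'\<bar>) + (if k = k' then (R\<^sup>2 - \<mu>) * (y k)\<^sup>2 else 0))"
        by (intro sum.cong refl) (auto simp: c_def algebra_simps power2_eq_square abs_mult_self_eq)
      also have "\<dots> = (\<Sum>k'<r. \<mu> * (\<bar>y k\<bar> * \<bar>y k'\<bar>)) + (if k < r then (R\<^sup>2 - \<mu>) * (y k)\<^sup>2 else 0)"
        by (simp add: sum.distrib)
      finally show ?thesis .
    qed
    then show ?thesis by (simp add: sum.distrib)
  qed
  also have "\<dots> = \<mu> * (\<Sum>k<r. \<bar>y k\<bar>)\<^sup>2 + (R\<^sup>2 - \<mu>) * (\<Sum>k<r. (y k)\<^sup>2)"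
  proof -
    have e1: "\<mu> * (\<Sum>k<r. \<bar>y k\<bar>)\<^sup>2 = (\<Sum>k<r. \<Sum>k'<r. \<mu> * (\<bar>y k\<bar> * \<bar>y k'\<bar>))"
    proof -
      have "(\<Sum>k<r. \<bar>y k\<bar>)\<^sup>2 = (\<Sum>k<r. \<Sum>k'<r. \<bar>y k\<bar> * \<bar>y k'\<bar>)"
        by (simp only: power2_eq_square sum_product)
      then show ?thesis by (simp add: sum_distrib_left)
    qed
    have e2: "(R\<^sup>2 - \<mu>) * (\<Sum>k<r. (y k)\<^sup>2) = (\<Sum>k<r. (R\<^sup>2 - \<mu>) * (y k)\<^sup>2)"
      by (simp only: sum_distrib_left)
    show ?thesis by (simp only: e1 e2)
  qed
  also have "\<dots> \<le> \<mu> * (real r * (\<Sum>k<r. (y k)\<^sup>2)) + (R\<^sup>2 - \<mu>) * (\<Sum>k<r. (y k)\<^sup>2)"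
    using \<mu> sum_abs_sq_le[where r=r and y=y] by (intro add_right_mono mult_left_mono) auto
  also have "\<dots> = (sqrt (R\<^sup>2 + \<mu> * (real r - 1)))\<^sup>2 * (\<Sum>k<r. (y k)\<^sup>2)"
  proof -
    have "R\<^sup>2 + \<mu> * (real r - 1) \<ge> 0" using \<mu> r by simp
    then show ?thesis by (simp add: algebra_simps)
  qed
  finally show "(\<Sum>a<n. (\<Sum>k<r. w k a * y k)\<^sup>2) \<le> (sqrt (R\<^sup>2 + \<mu> * (real r - 1)))\<^sup>2 * (\<Sum>k<r. (y k)\<^sup>2)" .
qed

lemma Tf_cong: "(\<And>j. j < d \<Longrightarrow> A j = B j) \<Longrightarrow> Tf d r X A is = Tf d r X B is"
  unfolding Tf_def by (intro sum.cong refl arg_cong2[where f="(*)"] prod.cong) auto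

lemma Tf_diffC: "Tf d r C A is - Tf d r C' A is = Tf d r (\<lambda>ks. C ks - C' ks) A is"
  by (simp add: Tf_def sum_subtractf left_diff_distrib)

lemma Tf_swap_mode:
  assumes i: "i < d" and eq: "\<And>j. j < d \<Longrightarrow> j \<noteq> i \<Longrightarrow> A j = B j"
  shows "Tf d r X A is - Tf d r X B is = Tf d r X (A(i := (\<lambda>a k. A i a k - B i a k))) is"
proof -
  have "X ks * (\<Prod>j<d. A j (is!j) (ks!j)) - X ks * (\<Prod>j<d. B j (is!j) (ks!j))
      = X ks * (\<Prod>j<d. (A(i := (\<lambda>a k. A i a k - B i a k))) j (is!j) (ks!j))" for ks
  proof -
    define P where "P = (\<Prod>j\<in>{..<d}-{i}. A j (is!j) (ks!j))"
    have pA: "(\<Prod>j<d. A j (is!j) (ks!j)) = A i (is!i) (ks!i) * P"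
      unfolding P_def using i by (subst prod.remove[of _ i]) auto
    have pB: "(\<Prod>j<d. B j (is!j) (ks!j)) = B i (is!i) (ks!i) * P"
      unfolding P_def using i eq by (subst prod.remove[of _ i]) (auto intro!: prod.cong)
    have pW: "(\<Prod>j<d. (A(i := (\<lambda>a k. A i a k - B i a k))) j (is!j) (ks!j)) = (A i (is!i) (ks!i) - B i (is!i) (ks!i)) * P"
      unfolding P_def using i by (subst prod.remove[of _ i]) (auto intro!: prod.cong)
    show ?thesis unfolding pA pB pW by (simp add: algebra_simps)
  qed
  then show ?thesis by (simp add: Tf_def sum_subtractf[symmetric])
qed

definition Wt :: "(nat \<Rightarrow> nat \<Rightarrow> nat \<Rightarrow> real) \<Rightarrow> (nat \<Rightarrow> nat \<Rightarrow> nat \<Rightarrow> real) \<Rightarrow> nat \<Rightarrow> nat \<Rightarrow> nat \<Rightarrow> nat \<Rightarrow> real" where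
  "Wt A A' i = (\<lambda>j. if j < i then A' j else A j)(i := (\<lambda>a k. A i a k - A' i a k))"

lemma Tf_telescope:
  "Tf d r X A is - Tf d r X A' is = (\<Sum>i<d. Tf d r X (Wt A A' i) is)"
proof -
  define V where "V i = (\<lambda>j. if j < i then A' j else A j)" for i :: nat
  have step: "Tf d r X (V i) is - Tf d r X (V (Suc i)) is = Tf d r X (Wt A A' i) is" if "i < d" for i
  proof -
    have "Tf d r X (V i) is - Tf d r X (V (Suc i)) is = Tf d r X ((V i)(i := (\<lambda>a k. V i i a k - V (Suc i) i a k))) is"
      by (rule Tf_swap_mode[OF that]) (auto simp: V_def)
    also have "(V i)(i := (\<lambda>a k. V i i a k - V (Suc i) i a k)) = Wt A A' i"
      by (simp add: V_def Wt_def)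
    finally show ?thesis .
  qed
  have "(\<Sum>i<d. Tf d r X (Wt A A' i) is) = (\<Sum>i<d. Tf d r X (V i) is - Tf d r X (V (Suc i)) is)"
    by (intro sum.cong refl) (simp add: step)
  also have "\<dots> = Tf d r X (V 0) is - Tf d r X (V d) is"
    by (rule sum_lessThan_telescope')
  also have "Tf d r X (V 0) is = Tf d r X A is" by (simp add: V_def)
  also have "Tf d r X (V d) is = Tf d r X A' is" by (rule Tf_cong) (simp add: V_def)
  finally show ?thesis by simp
qed

lemma L2_set_sum_le:
  assumes "finite S"
  shows "L2_set (\<lambda>x. \<Sum>i\<in>S. f i x) T \<le> (\<Sum>i\<in>S. L2_set (f i) T)"
  using assms
proof (induction S)
  case empty
  then show ?case by (simp add: L2_set_def)
next
  case (insert a S)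
  have "L2_set (\<lambda>x. \<Sum>i\<in>insert a S. f i x) T = L2_set (\<lambda>x. f a x + (\<Sum>i\<in>S. f i x)) T"
    using insert by simp
  also have "\<dots> \<le> L2_set (f a) T + L2_set (\<lambda>x. \<Sum>i\<in>S. f i x) T"
    by (rule L2_set_triangle_ineq)
  also have "\<dots> \<le> L2_set (f a) T + (\<Sum>i\<in>S. L2_set (f i) T)"
    using insert by simp
  finally show ?case using insert by simp
qed

lemma Sx_diag: "i < d \<Longrightarrow> Sx d r X i k k = (\<Sum>ks\<in>{ks\<in>idx d r. ks!i = k}. (X ks)\<^sup>2)"
  unfolding Sx_def by (intro sum.cong refl) (auto simp: power2_eq_square)

lemma Sx_diag_nonneg: "i < d \<Longrightarrow> Sx d r X i k k \<ge> 0"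
  by (simp add: Sx_diag sum_nonneg)

lemma Sx_diag_sum: "i < d \<Longrightarrow> (\<Sum>k<r. Sx d r X i k k) = fr d r X"
proof -
  assume i: "i < d"
  have "(\<Sum>k<r. Sx d r X i k k) = (\<Sum>k<r. \<Sum>ks\<in>{ks\<in>idx d r. ks!i = k}. (X ks)\<^sup>2)"
    using i by (simp add: Sx_diag)
  also have "\<dots> = (\<Sum>ks\<in>idx d r. (X ks)\<^sup>2)"
  proof (rule sum.group)
    show "(\<lambda>ks. ks!i) ` idx d r \<subseteq> {..<r}"
      using i by (auto simp: idx_def)
  qed auto
  finally show ?thesis by (simp add: fr_def)
qed

lemma L2_fr: "L2_set Y (idx d n) = sqrt (fr d n Y)"
  by (simp add: L2_set_def fr_def)

lemma err_bound:
  fixes L \<delta>0 \<delta> :: real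
  assumes L: "L \<ge> 0"
    and opA: "\<And>j. j < d \<Longrightarrow> opn n r (A j) L" and opA': "\<And>j. j < d \<Longrightarrow> opn n r (A' j) L"
    and C': "fr d r C' = 1"
    and orth: "\<And>i p q. i < d \<Longrightarrow> p < r \<Longrightarrow> q < r \<Longrightarrow> p \<noteq> q \<Longrightarrow> Sx d r C' i p q = 0"
    and Cd: "sqrt (fr d r (\<lambda>ks. C ks - C' ks)) \<le> \<delta>0"
    and colw: "\<And>i k. i < d \<Longrightarrow> k < r \<Longrightarrow> Gm n (\<lambda>a k. A i a k - A' i a k) k k \<le> \<delta>\<^sup>2"
    and \<delta>: "\<delta> \<ge> 0"
  shows "L2_set (\<lambda>is. Tf d r C A is - Tf d r C' A' is) (idx d n) \<le> L ^ d * \<delta>0 + real d * (L ^ (d - 1) * \<delta>)"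
proof -
  have split: "Tf d r C A is - Tf d r C' A' is = Tf d r (\<lambda>ks. C ks - C' ks) A is + (\<Sum>i<d. Tf d r C' (Wt A A' i) is)" for "is"
    using Tf_diffC[of d r C A "is" C'] Tf_telescope[of d r C' A "is" A'] by simp
  have t0: "L2_set (Tf d r (\<lambda>ks. C ks - C' ks) A) (idx d n) \<le> L ^ d * \<delta>0"
  proof -
    have "fr d n (Tf d r (\<lambda>ks. C ks - C' ks) A) \<le> (\<Prod>j<d. L\<^sup>2) * fr d r (\<lambda>ks. C ks - C' ks)"
      by (rule op_lemma) (rule opA)
    then have "sqrt (fr d n (Tf d r (\<lambda>ks. C ks - C' ks) A)) \<le> sqrt ((L ^ d)\<^sup>2 * fr d r (\<lambda>ks. C ks - C' ks))"
      by (simp add: power_mult_distrib[symmetric] power_mult[symmetric] mult.commute)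
    also have "\<dots> = L ^ d * sqrt (fr d r (\<lambda>ks. C ks - C' ks))"
      using L by (simp add: real_sqrt_mult)
    also have "\<dots> \<le> L ^ d * \<delta>0"
      using L Cd by (intro mult_left_mono) auto
    finally show ?thesis by (simp add: L2_fr)
  qed
  have ti: "L2_set (Tf d r C' (Wt A A' i)) (idx d n) \<le> L ^ (d - 1) * \<delta>" if i: "i < d" for i
  proof -
    have opW: "opn n r (Wt A A' i j) L" if "j < d" "j \<noteq> i" for j
      using that opA opA' by (auto simp: Wt_def)
    have WI: "Wt A A' i i = (\<lambda>a k. A i a k - A' i a k)" by (simp add: Wt_def)
    have "fr d n (Tf d r C' (Wt A A' i)) \<le> (\<Prod>j\<in>{..<d}-{i}. L\<^sup>2) * (\<Sum>k<r. \<Sum>k'<r. Gm n (Wt A A' i i) k k' * Sx d r C' i k k')"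
      by (rule H_lemma[OF i]) (rule opW)
    also have "(\<Sum>k<r. \<Sum>k'<r. Gm n (Wt A A' i i) k k' * Sx d r C' i k k') = (\<Sum>k<r. Gm n (Wt A A' i i) k k * Sx d r C' i k k)"
    proof (intro sum.cong refl)
      fix k assume k: "k \<in> {..<r}"
      have "(\<Sum>k'<r. Gm n (Wt A A' i i) k k' * Sx d r C' i k k') = (\<Sum>k'<r. if k' = k then Gm n (Wt A A' i i) k k * Sx d r C' i k k else 0)"
        using orth[OF i] k by (intro sum.cong refl) auto
      also have "\<dots> = Gm n (Wt A A' i i) k k * Sx d r C' i k k" using k by simp
      finally show "(\<Sum>k'<r. Gm n (Wt A A' i i) k k' * Sx d r C' i k k') = Gm n (Wt A A' i i) k k * Sx d r C' i k k" .
    qed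
    also have "\<dots> \<le> (\<Sum>k<r. \<delta>\<^sup>2 * Sx d r C' i k k)"
      using colw[OF i] Sx_diag_nonneg[OF i] by (intro sum_mono mult_right_mono) (auto simp: WI)
    also have "\<dots> = \<delta>\<^sup>2" using Sx_diag_sum[OF i] C' by (simp add: sum_distrib_left[symmetric])
    also have "(\<Prod>j\<in>{..<d}-{i}. L\<^sup>2) = (L ^ (d - 1))\<^sup>2"
      using i by (simp add: power_mult[symmetric] power_mult_distrib[symmetric] mult.commute)
    finally have "fr d n (Tf d r C' (Wt A A' i)) \<le> (L ^ (d - 1))\<^sup>2 * \<delta>\<^sup>2"
      by (simp add: mult_left_mono)
    then have "sqrt (fr d n (Tf d r C' (Wt A A' i))) \<le> sqrt ((L ^ (d - 1) * \<delta>)\<^sup>2)"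
      by (simp add: power_mult_distrib)
    also have "\<dots> = L ^ (d - 1) * \<delta>" using L \<delta> by simp
    finally show ?thesis by (simp add: L2_fr)
  qed
  have "L2_set (\<lambda>is. Tf d r C A is - Tf d r C' A' is) (idx d n)
      = L2_set (\<lambda>is. Tf d r (\<lambda>ks. C ks - C' ks) A is + (\<Sum>i<d. Tf d r C' (Wt A A' i) is)) (idx d n)"
    by (simp only: split)
  also have "\<dots> \<le> L2_set (Tf d r (\<lambda>ks. C ks - C' ks) A) (idx d n) + L2_set (\<lambda>is. \<Sum>i<d. Tf d r C' (Wt A A' i) is) (idx d n)"
    by (rule L2_set_triangle_ineq)
  also have "\<dots> \<le> L ^ d * \<delta>0 + (\<Sum>i<d. L2_set (Tf d r C' (Wt A A' i)) (idx d n))"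
    using t0 L2_set_sum_le[of "{..<d}" "\<lambda>i. Tf d r C' (Wt A A' i)" "idx d n"] by simp
  also have "\<dots> \<le> L ^ d * \<delta>0 + (\<Sum>i<d. L ^ (d - 1) * \<delta>)"
    using ti by (intro add_left_mono sum_mono) auto
  also have "\<dots> = L ^ d * \<delta>0 + real d * (L ^ (d - 1) * \<delta>)" by simp
  finally show ?thesis .
qed

lemma conv_pow:
  fixes t x :: real
  assumes t: "0 \<le> t" "t \<le> 1" and x: "x \<ge> 0"
  shows "(1 + t * x) ^ m \<le> 1 + t * ((1 + x) ^ m - 1)"
proof (induction m)
  case 0
  then show ?case by simp
next
  case (Suc m)
  have pm: "(1 + x) ^ m \<ge> 1" using x by simp
  have "(1 + t * x) ^ Suc m = (1 + t * x) * (1 + t * x) ^ m" by simp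
  also have "\<dots> \<le> (1 + t * x) * (1 + t * ((1 + x) ^ m - 1))"
    using Suc t x by (intro mult_left_mono) auto
  also have "\<dots> = 1 + t * x + t * ((1 + x) ^ m - 1) + t * t * (x * ((1 + x) ^ m - 1))"
    by (simp add: algebra_simps)
  also have "\<dots> \<le> 1 + t * x + t * ((1 + x) ^ m - 1) + t * (x * ((1 + x) ^ m - 1))"
  proof -
    have "t * t \<le> t" using t by (simp add: mult_left_le)
    moreover have "x * ((1 + x) ^ m - 1) \<ge> 0" using x pm by simp
    ultimately show ?thesis by (intro add_left_mono mult_right_mono) auto
  qed
  also have "\<dots> = 1 + t * ((1 + x) ^ Suc m - 1)" by (simp add: algebra_simps)
  finally show ?case .
qed

lemma powr_half_pow: "(Y::real) > 0 \<Longrightarrow> sqrt Y ^ m = Y powr (real m / 2)"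
proof -
  assume Y: "Y > 0"
  show ?thesis
  proof -
    have False: "Y \<noteq> 0" using Y by simp
    then have "sqrt Y ^ m = (Y powr (1/2)) ^ m" using Y by (simp add: powr_half_sqrt)
    also have "\<dots> = Y powr (real m * (1/2))" using False by (simp add: powr_power)
    finally show ?thesis by simp
  qed
qed

lemma key_ineq:
  fixes R \<mu> :: real and d r :: nat
  assumes R: "R \<ge> 1" and \<mu>: "0 \<le> \<mu>" "\<mu> \<le> 1" and r: "r \<ge> 1" and d: "d \<ge> 1"
  shows "R * sqrt (R\<^sup>2 + \<mu> * (real r - 1)) ^ (d - 1) \<le> R ^ (d - 1) * sqrt (R\<^sup>2 + \<mu> * real (r ^ d))"
proof -
  define t where "t = \<mu> / R\<^sup>2"
  have R2: "R\<^sup>2 \<ge> 1" using R by (simp add: one_le_power)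
  have t: "0 \<le> t" "t \<le> 1" using \<mu> R2 by (auto simp: t_def divide_le_eq_1)
  have Rt: "R\<^sup>2 * (t * x) = \<mu> * x" for x using R by (simp add: t_def)
  have L2: "R\<^sup>2 + \<mu> * (real r - 1) = R\<^sup>2 * (1 + t * (real r - 1))"
    by (simp only: ring_distribs(1) Rt mult_1_right)
  have R2m: "R\<^sup>2 + \<mu> * real (r ^ d) = R\<^sup>2 * (1 + t * real (r ^ d))"
    by (simp only: ring_distribs(1) Rt mult_1_right)
  have cp: "(1 + t * (real r - 1)) ^ (d - 1) \<le> 1 + t * real (r ^ d)"
  proof -
    have "(1 + t * (real r - 1)) ^ (d - 1) \<le> 1 + t * ((1 + (real r - 1)) ^ (d - 1) - 1)"
      using t r by (intro conv_pow) auto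
    also have "\<dots> \<le> 1 + t * real (r ^ d)"
    proof -
      have "(1 + (real r - 1)) ^ (d - 1) - 1 \<le> real (r ^ d)"
      proof -
        have "real r ^ (d - 1) \<le> real r ^ d" using r by (intro power_increasing) auto
        then show ?thesis by simp
      qed
      then show ?thesis using t by (intro add_left_mono mult_left_mono) auto
    qed
    finally show ?thesis .
  qed
  have nn1: "0 \<le> 1 + t * (real r - 1)" using t r by simp
  have sqp: "(sqrt Y ^ k)\<^sup>2 = Y ^ k" if "Y \<ge> 0" for Y :: real and k
  proof -
    have "(sqrt Y ^ k)\<^sup>2 = (sqrt Y * sqrt Y) ^ k" by (simp only: power2_eq_square power_mult_distrib)
    also have "\<dots> = Y ^ k" using that by simp
    finally show ?thesis .
  qed
  have sqR: "(R ^ k)\<^sup>2 = (R\<^sup>2) ^ k" for k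
    by (simp only: power2_eq_square power_mult_distrib)
  have Y1: "R\<^sup>2 + \<mu> * (real r - 1) \<ge> 0" using \<mu> r R2 by simp
  have Y2: "R\<^sup>2 + \<mu> * real (r ^ d) \<ge> 0" using \<mu> R2 by simp
  have "(R * sqrt (R\<^sup>2 + \<mu> * (real r - 1)) ^ (d - 1))\<^sup>2 = R\<^sup>2 * (R\<^sup>2 + \<mu> * (real r - 1)) ^ (d - 1)"
    by (simp only: power_mult_distrib sqp[OF Y1])
  also have "\<dots> = R\<^sup>2 * ((R\<^sup>2) ^ (d - 1) * (1 + t * (real r - 1)) ^ (d - 1))"
    by (simp only: L2 power_mult_distrib)
  also have "\<dots> \<le> R\<^sup>2 * ((R\<^sup>2) ^ (d - 1) * (1 + t * real (r ^ d)))"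
    using cp by (intro mult_left_mono) auto
  also have "\<dots> = (R ^ (d - 1))\<^sup>2 * (R\<^sup>2 + \<mu> * real (r ^ d))"
    by (simp only: R2m sqR mult_ac)
  also have "\<dots> = (R ^ (d - 1) * sqrt (R\<^sup>2 + \<mu> * real (r ^ d)))\<^sup>2"
    using Y2 by (simp only: power_mult_distrib real_sqrt_pow2)
  finally have sq: "(R * sqrt (R\<^sup>2 + \<mu> * (real r - 1)) ^ (d - 1))\<^sup>2 \<le> (R ^ (d - 1) * sqrt (R\<^sup>2 + \<mu> * real (r ^ d)))\<^sup>2" .
  show ?thesis
    by (rule power2_le_imp_le[OF sq]) (use R \<mu> in auto)
qed

lemma final_arith:
  fixes d r n :: nat and \<epsilon> \<mu> R :: real
  assumes d: "d \<ge> 1" and r: "r \<ge> 1" and \<epsilon>: "0 < \<epsilon>" "\<epsilon> < 1" and \<mu>: "0 \<le> \<mu>" "\<mu> \<le> 1" and R: "R \<ge> 1"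
  shows "(1 + 2 * 1 / ((\<epsilon> / (2 * (real d + 1))) / sqrt (R\<^sup>2 + \<mu> * (real r - 1)) ^ d)) ^ (r ^ d)
        * ((1 + 2 * R / ((\<epsilon> / (2 * (real d + 1))) / sqrt (R\<^sup>2 + \<mu> * (real r - 1)) ^ (d - 1))) ^ (r * n)) ^ d
      \<le> (6 * (real d + 1) / \<epsilon>) ^ (r ^ d + r * n * d)
         * (R\<^sup>2 + \<mu> * real r) powr (real (r ^ d * d) / 2)
         * (R\<^sup>2 + \<mu> * real (r ^ d)) powr (real (d * n * r) / 2)
         * R ^ ((d - 1) * d * n * r)"
proof -
  define Y1 where "Y1 = R\<^sup>2 + \<mu> * (real r - 1)"
  define Y2 where "Y2 = R\<^sup>2 + \<mu> * real (r ^ d)"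
  define L where "L = sqrt Y1"
  define c where "c = 6 * (real d + 1) / \<epsilon>"
  define Q where "Q = R ^ (d - 1) * sqrt Y2"
  have R2: "R\<^sup>2 \<ge> 1" using R by (simp add: one_le_power)
  have "\<mu> * (real r - 1) \<ge> 0" using \<mu> r by simp
  then have Y1: "Y1 \<ge> 1" using R2 by (simp add: Y1_def)
  have "\<mu> * real (r ^ d) \<ge> 0" using \<mu> by simp
  then have Y2: "Y2 \<ge> 1" using R2 by (simp add: Y2_def)
  have L: "L \<ge> 1" using Y1 by (simp add: L_def)
  have c: "c > 0" using \<epsilon> by (simp add: c_def)
  have Ld: "L ^ d \<ge> 1" and Ld1: "L ^ (d - 1) \<ge> 1" using L by (simp_all add: one_le_power)
  have RL: "R * L ^ (d - 1) \<ge> 1" using R Ld1 by (metis mult_mono zero_le_one mult_1 order_trans)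
  have gen: "1 + 2 * z / ((\<epsilon> / (2 * (real d + 1))) / w) \<le> c * (z * w)" if z: "z * w \<ge> 1" "w > 0" for z w
  proof -
    have "2 * z / ((\<epsilon> / (2 * (real d + 1))) / w) = 4 * (real d + 1) * (z * w) / \<epsilon>"
      using \<epsilon> z by (simp add: field_simps)
    moreover have "1 + 4 * (real d + 1) * (z * w) / \<epsilon> \<le> c * (z * w)"
    proof -
      have "\<epsilon> \<le> 2 * (real d + 1) * (z * w)" using \<epsilon> z
        by (smt (verit) mult_le_cancel_right1 of_nat_0_le_iff)
      then have "1 \<le> 2 * (real d + 1) * (z * w) / \<epsilon>" using \<epsilon> by (simp add: le_divide_eq)
      moreover have "c * (z * w) = 4 * (real d + 1) * (z * w) / \<epsilon> + 2 * (real d + 1) * (z * w) / \<epsilon>"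
        unfolding c_def by (simp add: add_divide_distrib[symmetric] algebra_simps)
      ultimately show ?thesis by linarith
    qed
    ultimately show ?thesis by (simp only:)
  qed
  have a: "1 + 2 * 1 / ((\<epsilon> / (2 * (real d + 1))) / L ^ d) \<le> c * L ^ d"
    using gen[of 1 "L ^ d"] Ld by simp
  have b: "1 + 2 * R / ((\<epsilon> / (2 * (real d + 1))) / L ^ (d - 1)) \<le> c * Q"
  proof -
    have "1 + 2 * R / ((\<epsilon> / (2 * (real d + 1))) / L ^ (d - 1)) \<le> c * (R * L ^ (d - 1))"
      using gen[of R "L ^ (d - 1)"] RL Ld1 by simp
    also have "\<dots> \<le> c * Q"
      unfolding Q_def L_def Y1_def Y2_def using key_ineq[OF R \<mu> r d] c by (intro mult_left_mono) auto
    finally show ?thesis .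
  qed
  have pos1: "0 \<le> 1 + 2 * 1 / ((\<epsilon> / (2 * (real d + 1))) / L ^ d)" using \<epsilon> L by simp
  have pos2: "0 \<le> 1 + 2 * R / ((\<epsilon> / (2 * (real d + 1))) / L ^ (d - 1))" using \<epsilon> L R by simp
  have main: "(1 + 2 * 1 / ((\<epsilon> / (2 * (real d + 1))) / L ^ d)) ^ (r ^ d)
        * ((1 + 2 * R / ((\<epsilon> / (2 * (real d + 1))) / L ^ (d - 1))) ^ (r * n)) ^ d
      \<le> (c * L ^ d) ^ (r ^ d) * ((c * Q) ^ (r * n)) ^ d"
    using a b pos1 pos2 by (intro mult_mono power_mono zero_le_power) auto
  have e1: "(c * L ^ d) ^ (r ^ d) = c ^ (r ^ d) * Y1 powr (real (r ^ d * d) / 2)"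
  proof -
    have "(c * L ^ d) ^ (r ^ d) = c ^ (r ^ d) * L ^ (r ^ d * d)"
      by (simp add: power_mult_distrib power_mult[symmetric] mult.commute)
    also have "L ^ (r ^ d * d) = Y1 powr (real (r ^ d * d) / 2)"
      unfolding L_def using Y1 by (intro powr_half_pow) simp
    finally show ?thesis .
  qed
  have e1': "Y1 powr (real (r ^ d * d) / 2) \<le> (R\<^sup>2 + \<mu> * real r) powr (real (r ^ d * d) / 2)"
    using Y1 \<mu> by (intro powr_mono2) (auto simp: Y1_def algebra_simps)
  have e2: "((c * Q) ^ (r * n)) ^ d = c ^ (r * n * d) * (R ^ ((d - 1) * d * n * r) * Y2 powr (real (d * n * r) / 2))"
  proof -
    have "((c * Q) ^ (r * n)) ^ d = c ^ (r * n * d) * (R ^ ((d - 1) * (r * n * d)) * sqrt Y2 ^ (r * n * d))"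
    proof -
      have "((c * Q) ^ (r * n)) ^ d = (c * Q) ^ (r * n * d)" by (simp only: power_mult)
      also have "\<dots> = c ^ (r * n * d) * ((R ^ (d - 1)) ^ (r * n * d) * sqrt Y2 ^ (r * n * d))"
        by (simp only: Q_def power_mult_distrib)
      also have "(R ^ (d - 1)) ^ (r * n * d) = R ^ ((d - 1) * (r * n * d))" by (simp only: power_mult)
      finally show ?thesis .
    qed
    also have "sqrt Y2 ^ (r * n * d) = Y2 powr (real (d * n * r) / 2)"
      using Y2 by (subst powr_half_pow) (auto simp: mult_ac)
    also have "(d - 1) * (r * n * d) = (d - 1) * d * n * r" by (simp add: mult_ac)
    finally show ?thesis .
  qed
  define X where "X = c ^ (r * n * d) * (R ^ ((d - 1) * d * n * r) * Y2 powr (real (d * n * r) / 2))"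
  have X: "X \<ge> 0" using c R by (simp add: X_def)
  have "c ^ (r ^ d) * Y1 powr (real (r ^ d * d) / 2) * X \<le> c ^ (r ^ d) * (R\<^sup>2 + \<mu> * real r) powr (real (r ^ d * d) / 2) * X"
    using e1' c X by (intro mult_right_mono mult_left_mono) auto
  with main e1 e2 have fin: "(1 + 2 * 1 / ((\<epsilon> / (2 * (real d + 1))) / L ^ d)) ^ (r ^ d)
        * ((1 + 2 * R / ((\<epsilon> / (2 * (real d + 1))) / L ^ (d - 1))) ^ (r * n)) ^ d
      \<le> c ^ (r ^ d) * (R\<^sup>2 + \<mu> * real r) powr (real (r ^ d * d) / 2) * X"
    by (simp only: X_def)
  have "c ^ (r ^ d) * (R\<^sup>2 + \<mu> * real r) powr (real (r ^ d * d) / 2) * X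
      = (6 * (real d + 1) / \<epsilon>) ^ (r ^ d + r * n * d)
         * (R\<^sup>2 + \<mu> * real r) powr (real (r ^ d * d) / 2)
         * (R\<^sup>2 + \<mu> * real (r ^ d)) powr (real (d * n * r) / 2)
         * R ^ ((d - 1) * d * n * r)"
    by (simp only: X_def c_def Y2_def power_add mult_ac)
  with fin show ?thesis by (simp only: L_def Y1_def)
qed

lemma l2d_block: "l2d ({k} \<times> A) w w' = sqrt (\<Sum>a\<in>A. (w (k, a) - w' (k, a))\<^sup>2)"
proof -
  have "{k} \<times> A = Pair k ` A" by auto
  then show ?thesis by (simp add: l2d_def sum.reindex inj_on_def)
qed

lemma frob_L2: "frob d m X = L2_set X (idx d m)"
  by (simp add: frob_def L2_set_def)

lemma frob_sym: "frob d n (\<lambda>is. X is - Y is) = frob d n (\<lambda>is. Y is - X is)"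
  by (simp add: frob_def power2_commute)

lemma frob_tri: "frob d n (\<lambda>is. X is - Z is) \<le> frob d n (\<lambda>is. X is - Y is) + frob d n (\<lambda>is. Y is - Z is)"
proof -
  have "frob d n (\<lambda>is. X is - Z is) = L2_set (\<lambda>is. (X is - Y is) + (Y is - Z is)) (idx d n)"
    by (simp add: frob_L2)
  also have "\<dots> \<le> L2_set (\<lambda>is. X is - Y is) (idx d n) + L2_set (\<lambda>is. Y is - Z is) (idx d n)"
    by (rule L2_set_triangle_ineq)
  finally show ?thesis by (simp add: frob_L2)
qed

lemma internal_net:
  assumes E: "finite E" and cov: "\<And>X. X \<in> S \<Longrightarrow> \<exists>Y\<in>E. frob d n (\<lambda>is. X is - Y is) \<le> t / 2"
  shows "\<exists>N. finite N \<and> N \<subseteq> S \<and> card N \<le> card E \<and> (\<forall>X\<in>S. \<exists>Y\<in>N. frob d n (\<lambda>is. X is - Y is) \<le> t)"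
proof -
  define E' where "E' = {Y\<in>E. \<exists>X\<in>S. frob d n (\<lambda>is. X is - Y is) \<le> t / 2}"
  define pick where "pick Y = (SOME X. X \<in> S \<and> frob d n (\<lambda>is. X is - Y is) \<le> t / 2)" for Y
  have pick: "pick Y \<in> S \<and> frob d n (\<lambda>is. pick Y is - Y is) \<le> t / 2" if "Y \<in> E'" for Y
  proof -
    have "\<exists>X. X \<in> S \<and> frob d n (\<lambda>is. X is - Y is) \<le> t / 2" using that by (auto simp: E'_def)
    then show ?thesis unfolding pick_def by (rule someI_ex)
  qed
  define N where "N = pick ` E'"
  have fE': "finite E'" using E by (simp add: E'_def)
  show ?thesis
  proof (intro exI[of _ N] conjI ballI)
    show "finite N" using fE' by (simp add: N_def)
    show "N \<subseteq> S" using pick by (auto simp: N_def)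
    show "card N \<le> card E"
    proof -
      have "E' \<subseteq> E" by (auto simp: E'_def)
      then have "card E' \<le> card E" by (rule card_mono[OF E])
      moreover have "card N \<le> card E'" unfolding N_def by (rule card_image_le[OF fE'])
      ultimately show ?thesis by linarith
    qed
    fix X assume X: "X \<in> S"
    obtain Y where Y: "Y \<in> E" "frob d n (\<lambda>is. X is - Y is) \<le> t / 2" using cov[OF X] by blast
    then have YE': "Y \<in> E'" using X by (auto simp: E'_def)
    have "frob d n (\<lambda>is. X is - pick Y is) \<le> frob d n (\<lambda>is. X is - Y is) + frob d n (\<lambda>is. Y is - pick Y is)"
      by (rule frob_tri)
    also have "\<dots> \<le> t / 2 + t / 2"
    proof (rule add_mono)
      show "frob d n (\<lambda>is. X is - Y is) \<le> t / 2" by (rule Y(2))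
      have "frob d n (\<lambda>is. Y is - pick Y is) = frob d n (\<lambda>is. pick Y is - Y is)" by (rule frob_sym)
      then show "frob d n (\<lambda>is. Y is - pick Y is) \<le> t / 2" using pick[OF YE'] by linarith
    qed
    finally show "\<exists>Z\<in>N. frob d n (\<lambda>is. X is - Z is) \<le> t" using YE' by (auto simp: N_def)
  qed
qed

theorem lemma2:
  fixes d n r :: nat and \<theta> \<epsilon> \<mu> R :: real
  assumes "d \<ge> 1" "n \<ge> 1" "r \<ge> 1" "\<theta> \<ge> 0" "0 < \<epsilon>" "\<epsilon> < 1" "0 < \<mu>" "\<mu> < 1" "R \<ge> 1"
  shows "covnum d n (Bset d n r R \<mu> \<theta>) \<epsilon> \<le> ereal (
           (6 * (real d + 1) / \<epsilon>) ^ (r ^ d + r * n * d)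
         * (R\<^sup>2 + \<mu> * real r) powr (real (r ^ d * d) / 2)
         * (R\<^sup>2 + \<mu> * real (r ^ d)) powr (real (d * n * r) / 2)
         * R ^ ((d - 1) * d * n * r))"
proof -
  note d = assms(1) and nn = assms(2) and r = assms(3) and \<epsilon> = assms(5,6) and \<mu> = assms(7,8) and R = assms(9)
  define S where "S = Bset d n r R \<mu> \<theta>"
  define L where "L = sqrt (R\<^sup>2 + \<mu> * (real r - 1))"
  define \<eta> where "\<eta> = \<epsilon> / (2 * (real d + 1))"
  define \<delta>0 where "\<delta>0 = \<eta> / L ^ d"
  define \<delta> where "\<delta> = \<eta> / L ^ (d - 1)"
  have R2: "R\<^sup>2 \<ge> 1" using R by (simp add: one_le_power)
  have "\<mu> * (real r - 1) \<ge> 0" using \<mu> r by simp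
  then have L1: "L \<ge> 1" using R2 by (simp add: L_def)
  have \<eta>: "\<eta> > 0" using \<epsilon> by (simp add: \<eta>_def)
  have \<delta>0: "\<delta>0 > 0" using \<eta> L1 by (simp add: \<delta>0_def)
  have \<delta>: "\<delta> > 0" using \<eta> L1 by (simp add: \<delta>_def)
  define KC where "KC = {C. frob d r C = 1 \<and> (\<forall>i<d. \<forall>p<r. \<forall>q<r. p \<noteq> q \<longrightarrow> Sx d r C i p q = 0)}"
  have KCb: "l2d b C (\<lambda>_. 0) \<le> 1" if "C \<in> KC" "b \<in> {idx d r}" for C b
    using that by (simp add: KC_def l2d_def frob_def)
  obtain N0 where N0: "finite N0" "N0 \<subseteq> KC" "real (card N0) \<le> (1 + 2 * 1 / \<delta>0) ^ card (idx d r)"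
      and N0c: "\<forall>C\<in>KC. \<exists>C'\<in>N0. \<forall>b\<in>{idx d r}. l2d b C C' \<le> \<delta>0"
    using exists_net[of "idx d r" "{idx d r}" \<delta>0 1 KC] \<delta>0 KCb by auto
  define IU where "IU = {..<r} \<times> {..<n}"
  define BU where "BU = (\<lambda>k. {k} \<times> {..<n}) ` {..<r}"
  define KU where "KU = {w :: nat \<times> nat \<Rightarrow> real. (\<forall>k<r. vnorm n (\<lambda>a. w (k, a)) \<le> R)
      \<and> (\<forall>k<r. \<forall>k'<r. k \<noteq> k' \<longrightarrow> \<bar>vinner n (\<lambda>a. w (k, a)) (\<lambda>a. w (k', a))\<bar> \<le> \<mu>)}"
  have BU: "\<Union>BU = IU" by (auto simp: BU_def IU_def)
  have KUb: "l2d b w (\<lambda>_. 0) \<le> R" if "w \<in> KU" "b \<in> BU" for w b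
    using that by (auto simp: KU_def BU_def l2d_block vnorm_def)
  obtain NU where NU: "finite NU" "NU \<subseteq> KU" "real (card NU) \<le> (1 + 2 * R / \<delta>) ^ card IU"
      and NUc: "\<forall>w\<in>KU. \<exists>w'\<in>NU. \<forall>b\<in>BU. l2d b w w' \<le> \<delta>"
    using exists_net[of IU BU \<delta> R KU] \<delta> R KUb BU by (auto simp: IU_def)
  have cIU: "card IU = r * n" by (simp add: IU_def card_cartesian_product)
  define cen where "cen = (\<lambda>(C', f). tucker d n r C' (\<lambda>i k a. f i (k, a)))"
  define E where "E = cen ` (N0 \<times> PiE {..<d} (\<lambda>_. NU))"
  have fE: "finite E" using N0 NU by (simp add: E_def finite_PiE)
  have cE: "card E \<le> card N0 * card NU ^ d"
  proof -
    have "card E \<le> card (N0 \<times> PiE {..<d} (\<lambda>_. NU))" unfolding E_def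
      by (rule card_image_le) (simp add: N0 NU finite_PiE)
    also have "\<dots> = card N0 * card NU ^ d" by (simp add: card_cartesian_product card_PiE)
    finally show ?thesis .
  qed
  have cov: "\<exists>Y\<in>E. frob d n (\<lambda>is. X is - Y is) \<le> \<epsilon> / 2" if X: "X \<in> S" for X
  proof -
    have "\<exists>C u. X = tucker d n r C u
      \<and> (\<forall>i<d. \<forall>k<r. vnorm n (u i k) \<le> R)
      \<and> (\<forall>i<d. \<forall>k<r. \<forall>k'<r. k \<noteq> k' \<longrightarrow> \<bar>vinner n (u i k) (u i k')\<bar> \<le> \<mu>)
      \<and> frob d r C = 1
      \<and> (\<forall>i<d. \<forall>p<r. \<forall>q<r. p \<noteq> q \<longrightarrow>
           (\<Sum>ks\<in>{ks\<in>idx d r. ks ! i = p}. C ks * C (ks[i := q])) = 0)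
      \<and> frob d n X \<ge> \<theta>"
      using X unfolding S_def Bset_def by (rule CollectD)
    then obtain C u where H: "X = tucker d n r C u
      \<and> (\<forall>i<d. \<forall>k<r. vnorm n (u i k) \<le> R)
      \<and> (\<forall>i<d. \<forall>k<r. \<forall>k'<r. k \<noteq> k' \<longrightarrow> \<bar>vinner n (u i k) (u i k')\<bar> \<le> \<mu>)
      \<and> frob d r C = 1
      \<and> (\<forall>i<d. \<forall>p<r. \<forall>q<r. p \<noteq> q \<longrightarrow>
           (\<Sum>ks\<in>{ks\<in>idx d r. ks ! i = p}. C ks * C (ks[i := q])) = 0)
      \<and> frob d n X \<ge> \<theta>"
      by (elim exE) (erule that)
    note Xd = H[THEN conjunct1]
    note un = H[THEN conjunct2, THEN conjunct1]
    note ui = H[THEN conjunct2, THEN conjunct2, THEN conjunct1]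
    note Cn = H[THEN conjunct2, THEN conjunct2, THEN conjunct2, THEN conjunct1]
    note Co = H[THEN conjunct2, THEN conjunct2, THEN conjunct2, THEN conjunct2, THEN conjunct1]
    have CK: "C \<in> KC" using Cn Co by (simp add: KC_def Sx_def)
    obtain C' where C': "C' \<in> N0" "l2d (idx d r) C C' \<le> \<delta>0" using N0c CK by auto
    have C'K: "C' \<in> KC" using C' N0 by auto
    have wK: "(\<lambda>(k, a). u i k a) \<in> KU" if "i < d" for i
      using un ui that by (simp add: KU_def)
    have "\<forall>i. \<exists>w'. i < d \<longrightarrow> w' \<in> NU \<and> (\<forall>b\<in>BU. l2d b (\<lambda>(k, a). u i k a) w' \<le> \<delta>)"
      using NUc wK by blast
    then obtain g where g: "\<And>i. i < d \<Longrightarrow> g i \<in> NU \<and> (\<forall>b\<in>BU. l2d b (\<lambda>(k, a). u i k a) (g i) \<le> \<delta>)"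
      by metis
    define f where "f = restrict g {..<d}"
    have fP: "f \<in> PiE {..<d} (\<lambda>_. NU)" using g by (auto simp: f_def)
    define Y where "Y = cen (C', f)"
    have YE: "Y \<in> E" using C' fP by (auto simp: E_def Y_def)
    define A where "A = (\<lambda>j a k. u j k a)"
    define A' where "A' = (\<lambda>j a k. f j (k, a))"
    have XT: "X is = Tf d r C A is" if "is \<in> idx d n" for "is"
      using that by (simp add: Xd tucker_def Tf_def A_def)
    have YT: "Y is = Tf d r C' A' is" if "is \<in> idx d n" for "is"
      using that by (simp add: Y_def cen_def tucker_def Tf_def A'_def)
    have fr_eq: "frob d n (\<lambda>is. X is - Y is) = L2_set (\<lambda>is. Tf d r C A is - Tf d r C' A' is) (idx d n)"
      unfolding frob_L2 by (rule L2_set_cong) (auto simp: XT YT)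
    have L0: "L \<ge> 0" using L1 by simp
    have opA: "opn n r (A j) L" if "j < d" for j
      unfolding A_def L_def using un ui that \<mu> r by (intro op_incoh) auto
    have opA': "opn n r (A' j) L" if "j < d" for j
    proof -
      have "g j \<in> KU" using g[OF that] NU by auto
      then have "opn n r (\<lambda>a k. (\<lambda>k a. g j (k, a)) k a) L"
        unfolding L_def KU_def using \<mu> r by (intro op_incoh) auto
      then show ?thesis using that by (simp add: A'_def f_def)
    qed
    have frC': "fr d r C' = 1"
    proof -
      have "sqrt (fr d r C') = 1" using C'K by (simp add: KC_def frob_def fr_def)
      then show ?thesis by simp
    qed
    have orth: "Sx d r C' i p q = 0" if "i < d" "p < r" "q < r" "p \<noteq> q" for i p q
      using C'K that by (simp add: KC_def)
    have Cd: "sqrt (fr d r (\<lambda>ks. C ks - C' ks)) \<le> \<delta>0"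
      using C' by (simp add: fr_def l2d_def)
    have colw: "Gm n (\<lambda>a k. A i a k - A' i a k) k k \<le> \<delta>\<^sup>2" if i: "i < d" and k: "k < r" for i k
    proof -
      have "{k} \<times> {..<n} \<in> BU" using k by (simp add: BU_def)
      then have "l2d ({k} \<times> {..<n}) (\<lambda>(k, a). u i k a) (g i) \<le> \<delta>" using g[OF i] by blast
      then have s: "sqrt (\<Sum>a<n. (u i k a - g i (k, a))\<^sup>2) \<le> \<delta>" by (simp add: l2d_block)
      have "Gm n (\<lambda>a k. A i a k - A' i a k) k k = (\<Sum>a<n. (u i k a - g i (k, a))\<^sup>2)"
        using i by (simp add: Gm_def A_def A'_def f_def power2_eq_square)
      also have "\<dots> = (sqrt (\<Sum>a<n. (u i k a - g i (k, a))\<^sup>2))\<^sup>2"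
        by (rule real_sqrt_pow2[symmetric]) (intro sum_nonneg, simp)
      also have "\<dots> \<le> \<delta>\<^sup>2"
      proof -
        have "0 \<le> (\<Sum>a<n. (u i k a - g i (k, a))\<^sup>2)" by (intro sum_nonneg) simp
        then show ?thesis using s by (intro power_mono) auto
      qed
      finally show ?thesis .
    qed
    have "frob d n (\<lambda>is. X is - Y is) \<le> L ^ d * \<delta>0 + real d * (L ^ (d - 1) * \<delta>)"
      unfolding fr_eq using \<delta> by (intro err_bound[OF L0 opA opA' frC' orth Cd colw]) auto
    also have "\<dots> = \<eta> + real d * \<eta>"
      using L1 by (simp add: \<delta>0_def \<delta>_def)
    also have "\<dots> = (real d + 1) * \<eta>" by (simp add: algebra_simps)
    also have "\<dots> = \<epsilon> / 2"
    proof -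
      have "real d + 1 \<noteq> 0" by simp
      then show ?thesis unfolding \<eta>_def by (simp add: field_simps)
    qed
    finally show ?thesis using YE by blast
  qed
  have "\<exists>N. finite N \<and> N \<subseteq> S \<and> card N \<le> card E \<and> (\<forall>X\<in>S. \<exists>Y\<in>N. frob d n (\<lambda>is. X is - Y is) \<le> \<epsilon>)"
    by (rule internal_net[where E=E and S=S and t=\<epsilon> and d=d and n=n, OF fE cov])
  then obtain N where Nall: "finite N \<and> N \<subseteq> S \<and> card N \<le> card E \<and> (\<forall>X\<in>S. \<exists>Y\<in>N. frob d n (\<lambda>is. X is - Y is) \<le> \<epsilon>)"
    by (rule exE)
  then have N: "finite N" "N \<subseteq> S" "card N \<le> card E" and Nc: "\<forall>X\<in>S. \<exists>Y\<in>N. frob d n (\<lambda>is. X is - Y is) \<le> \<epsilon>"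
    by simp_all

  have "covnum d n S \<epsilon> \<le> ereal (real (card N))"
    unfolding covnum_def using N Nc by (intro INF_lower) auto
  also have "real (card N) \<le> real (card N0) * real (card NU) ^ d"
    using N(3) cE by (metis of_nat_le_iff of_nat_mult of_nat_power order_trans)
  also have "\<dots> \<le> (1 + 2 * 1 / \<delta>0) ^ (r ^ d) * ((1 + 2 * R / \<delta>) ^ (r * n)) ^ d"
    using N0(3) NU(3) by (intro mult_mono power_mono) (auto simp: card_idx cIU)
  also have "\<dots> \<le> (6 * (real d + 1) / \<epsilon>) ^ (r ^ d + r * n * d)
         * (R\<^sup>2 + \<mu> * real r) powr (real (r ^ d * d) / 2)
         * (R\<^sup>2 + \<mu> * real (r ^ d)) powr (real (d * n * r) / 2)
         * R ^ ((d - 1) * d * n * r)"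
    unfolding \<delta>0_def \<delta>_def \<eta>_def L_def using final_arith[OF d r \<epsilon> _ _ R, of \<mu> n] \<mu> by simp
  finally show ?thesis by (simp add: S_def)
qed

end
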